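(* Let $u,v$ be generalized Stirling permutations and $s,t$ planar trees of the same degree. Then (1) if $u\le_{Pw}v$ then $\pi(u)\le_{PT}\pi(v)$; (2) if $s\le_{PT}t$ then $\iota(s)\le_{Pw}\iota(t)$.
   Context: A planar tree has linearly ordered children at each node, each node being a leaf or having $\ge2$ children (internal node); degree = number of leaves minus one. A generalized Stirling permutation (GSP) is a planar tree together with a bijection $\kappa$ from its internal nodes to $\{1,\dots,N\}$ ($N$ = number of internal nodes) increasing from each internal node to its internal children; $\pi(u)$ is its underlying planar tree. Its word $\mathbf w(u)$: a leaf has empty word; a node $x$ with children $c_1,\dots,c_k$ has word $\mathbf w(c_1)\kappa(x)\mathbf w(c_2)\cdots\kappa(x)\mathbf w(c_k)$. For each planar tree $t$ there is exactly one GSP with underlying tree $t$ whose word is $213$-avoiding (no $i<j<k$ with $w_k>w_i>w_j$); it is denoted $\iota(t)$. Planar weak order: for packed words, $w^{-1}(a)=\{p:w_p=a\}$, $\mathrm{iInv}(w)=\{(a,b):a<b,\ \min w^{-1}(a)>\max w^{-1}(b)\}$, $T_a(w)$ = $w$ with letters $a,a+1$ swapped; the order is the reflexive–transitive closure of: $u$ is covered by $w$ iff $u=T_a(w)$ and $|\mathrm{iInv}(w)|=|\mathrm{iInv}(u)|+1$. On GSPs, $u\le_{Pw}v$ iff $\mathbf w(u)\le\mathbf w(v)$. Planar Tamari order: if an internal node $x$ has children $c_1,\dots,c_{a-1},y$ ($a\ge2$) with $y$ internal having children $d_1,\dots,d_{b+1}$ ($b\ge1$), the left rotation at $x$ replaces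 the subtree at $x$ by a node with children $z,d_2,\dots,d_{b+1}$, where $z$ is a new node with children $c_1,\dots,c_{a-1},d_1$. $\le_{PT}$ is the reflexive–transitive closure of "$t$ is a left rotation of $s$". *)

theory Defs
  imports Main
begin

datatype ptree = Leaf | Node "ptree list"

fun ptree_wf :: "ptree \<Rightarrow> bool" where
  "ptree_wf Leaf = True"
| "ptree_wf (Node cs) = (2 \<le> length cs \<and> (\<forall>c\<in>set cs. ptree_wf c))"

fun leaves :: "ptree \<Rightarrow> nat" where
  "leaves Leaf = 1"
| "leaves (Node cs) = sum_list (map leaves cs)"

definition degree :: "ptree \<Rightarrow> nat" where
  "degree t = leaves t - 1"

section \<open>Generalized Stirling permutations (internally labelled planar trees)\<close>

datatype ltree = LLeaf | LNode nat "ltree list"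

fun lwf :: "ltree \<Rightarrow> bool" where
  "lwf LLeaf = True"
| "lwf (LNode k cs) = (2 \<le> length cs \<and> (\<forall>c\<in>set cs. lwf c))"

fun labels :: "ltree \<Rightarrow> nat list" where
  "labels LLeaf = []"
| "labels (LNode k cs) = k # concat (map labels cs)"

fun increasing :: "ltree \<Rightarrow> bool" where
  "increasing LLeaf = True"
| "increasing (LNode k cs) =
     (\<forall>c\<in>set cs. increasing c \<and> (case c of LLeaf \<Rightarrow> True | LNode j _ \<Rightarrow> k < j))"

definition gsp :: "ltree \<Rightarrow> bool" where
  "gsp u \<longleftrightarrow> lwf u \<and> distinct (labels u) \<and> set (labels u) = {1..length (labels u)}
             \<and> increasing u"

fun pi :: "ltree \<Rightarrow> ptree" where
  "pi LLeaf = Leaf"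
| "pi (LNode k cs) = Node (map pi cs)"

fun wjoin :: "nat \<Rightarrow> nat list list \<Rightarrow> nat list" where
  "wjoin k [] = []"
| "wjoin k [x] = x"
| "wjoin k (x # y # r) = x @ [k] @ wjoin k (y # r)"

fun word :: "ltree \<Rightarrow> nat list" where
  "word LLeaf = []"
| "word (LNode k cs) = wjoin k (map word cs)"

definition packed :: "nat list \<Rightarrow> bool" where
  "packed w \<longleftrightarrow> set w = {1..card (set w)}"

definition positions :: "nat list \<Rightarrow> nat \<Rightarrow> nat set" where
  "positions w a = {p. p < length w \<and> w ! p = a}"

definition iInv :: "nat list \<Rightarrow> (nat \<times> nat) set" where
  "iInv w = {(a, b). a \<in> set w \<and> b \<in> set w \<and> a < b \<and>
                     Min (positions w a) > Max (positions w b)}"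

definition Tswap :: "nat \<Rightarrow> nat list \<Rightarrow> nat list" where
  "Tswap a w = map (\<lambda>x. if x = a then a + 1 else if x = a + 1 then a else x) w"

definition pw_cover :: "nat list \<Rightarrow> nat list \<Rightarrow> bool" where
  "pw_cover u w \<longleftrightarrow> packed u \<and> packed w \<and>
     (\<exists>a. u = Tswap a w \<and> card (iInv w) = card (iInv u) + 1)"

definition pw_le :: "nat list \<Rightarrow> nat list \<Rightarrow> bool" where
  "pw_le = pw_cover\<^sup>*\<^sup>*"

definition gsp_le :: "ltree \<Rightarrow> ltree \<Rightarrow> bool" where
  "gsp_le u v \<longleftrightarrow> pw_le (word u) (word v)"

inductive left_rot :: "ptree \<Rightarrow> ptree \<Rightarrow> bool" where
  root: "cs \<noteq> [] \<Longrightarrow> ds \<noteq> [] \<Longrightarrow>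
         left_rot (Node (cs @ [Node (d1 # ds)])) (Node (Node (cs @ [d1]) # ds))"
| sub: "left_rot c c' \<Longrightarrow> left_rot (Node (l @ c # r)) (Node (l @ c' # r))"

definition pt_le :: "ptree \<Rightarrow> ptree \<Rightarrow> bool" where
  "pt_le = left_rot\<^sup>*\<^sup>*"

definition avoids213 :: "nat list \<Rightarrow> bool" where
  "avoids213 w \<longleftrightarrow> \<not> (\<exists>i j k. i < j \<and> j < k \<and> k < length w \<and> w ! k > w ! i \<and> w ! i > w ! j)"

definition iota :: "ptree \<Rightarrow> ltree" where
  "iota t = (THE u. gsp u \<and> pi u = t \<and> avoids213 (word u))"

end

theory Submission imports Defs "HOL-Library.Multiset" begin

definition sw :: "nat \<Rightarrow> nat \<Rightarrow> nat" where
  "sw a x = (if x = a then a + 1 else if x = a + 1 then a else x)"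

lemma Tswap_sw: "Tswap a w = map (sw a) w" by (simp add: Tswap_def sw_def)
lemma sw_sw[simp]: "sw a (sw a x) = x" by (simp add: sw_def)
lemma inj_sw: "inj (sw a)" by (metis injI sw_sw)
lemma Tswap_invol: "Tswap a (Tswap a w) = w" by (simp add: Tswap_sw comp_def)
lemma sw_other[simp]: "x \<noteq> a \<Longrightarrow> x \<noteq> a+1 \<Longrightarrow> sw a x = x" by (simp add: sw_def)

fun relabel :: "(nat \<Rightarrow> nat) \<Rightarrow> ltree \<Rightarrow> ltree" where
  "relabel f LLeaf = LLeaf"
| "relabel f (LNode k cs) = LNode (f k) (map (relabel f) cs)"

lemma map_wjoin: "map f (wjoin k ws) = wjoin (f k) (map (map f) ws)"
  by (induction k ws rule: wjoin.induct) auto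

lemma word_relabel: "word (relabel f g) = map f (word g)"
  by (induction g) (simp_all add: map_wjoin comp_def cong: map_cong)

lemma labels_relabel: "labels (relabel f g) = map f (labels g)"
  by (induction g) (simp_all add: map_concat comp_def cong: map_cong)

lemma pi_relabel: "pi (relabel f g) = pi g"
  by (induction g) (auto simp: comp_def)

lemma lwf_relabel: "lwf (relabel f g) = lwf g"
  by (induction g) auto

lemma set_wjoin: "ws \<noteq> [] \<Longrightarrow>
  set (wjoin k ws) = (\<Union>w\<in>set ws. set w) \<union> (if 2 \<le> length ws then {k} else {})"
  by (induction k ws rule: wjoin.induct) auto

lemma set_word: "lwf g \<Longrightarrow> set (word g) = set (labels g)"
proof (induction g)
  case LLeaf
  then show ?case by simp
next
  case (LNode k cs)
  then have "cs \<noteq> []" by auto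
  with LNode show ?case by (auto simp: set_wjoin)
qed

lemma inc_gt_aux: "increasing g \<Longrightarrow> (case g of LLeaf \<Rightarrow> True | LNode j _ \<Rightarrow> k' < j) \<Longrightarrow>
   x \<in> set (labels g) \<Longrightarrow> k' < x"
proof (induction g arbitrary: k' x)
  case LLeaf
  then show ?case by simp
next
  case (LNode j ds)
  show ?case
  proof (cases "x = j")
    case True
    then show ?thesis using LNode by simp
  next
    case False
    then obtain d where d: "d \<in> set ds" "x \<in> set (labels d)" using LNode.prems by auto
    have "j < x" using LNode.IH[OF d(1), of j x] LNode.prems d by auto
    then show ?thesis using LNode.prems by simp
  qed
qed

lemma inc_gt: "increasing (LNode k cs) \<Longrightarrow> c \<in> set cs \<Longrightarrow> x \<in> set (labels c) \<Longrightarrow> k < x"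
  using inc_gt_aux[of c k x] by auto

lemma root_in_word: "lwf (LNode k cs) \<Longrightarrow> k \<in> set (word (LNode k cs))"
  using set_word[of "LNode k cs"] by simp


definition before :: "nat list \<Rightarrow> nat \<Rightarrow> nat \<Rightarrow> bool" where
  "before w x y \<longleftrightarrow> \<not> (\<exists>w1 w2. w = w1 @ w2 \<and> y \<in> set w1 \<and> x \<in> set w2)"

lemma sw_eq_iff: "sw a x = y \<longleftrightarrow> x = sw a y" by (metis sw_sw)

lemma positions_map_sw: "positions (map (sw a) w) c = positions w (sw a c)"
  unfolding positions_def by (auto simp: sw_eq_iff)

lemma set_map_sw: "c \<in> set (map (sw a) w) \<longleftrightarrow> sw a c \<in> set w"
  by (auto, metis image_eqI sw_sw)

lemma sw_less: "c < d \<Longrightarrow> (c,d) \<noteq> (a, a+1) \<Longrightarrow> sw a c < sw a d"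
  by (auto simp: sw_def)

lemma finite_iInv: "finite (iInv w)"
proof -
  have "iInv w \<subseteq> set w \<times> set w" unfolding iInv_def by auto
  then show ?thesis by (rule finite_subset) auto
qed

lemma iInv_sw: "iInv (map (sw a) w) - {(a,a+1)} = (\<lambda>(c,d). (sw a c, sw a d)) ` (iInv w - {(a,a+1)})"
proof (rule set_eqI, rule iffI)
  fix p assume p: "p \<in> iInv (map (sw a) w) - {(a,a+1)}"
  obtain c d where cd: "p = (c,d)" by (cases p)
  have "(sw a c, sw a d) \<in> iInv w - {(a,a+1)}"
    using p cd sw_less[of c d a] unfolding iInv_def
    by (auto simp: positions_map_sw set_map_sw sw_def split: if_splits)
  moreover have "p = (\<lambda>(c,d). (sw a c, sw a d)) (sw a c, sw a d)" using cd by simp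
  ultimately show "p \<in> (\<lambda>(c,d). (sw a c, sw a d)) ` (iInv w - {(a,a+1)})" by blast
next
  fix p assume "p \<in> (\<lambda>(c,d). (sw a c, sw a d)) ` (iInv w - {(a,a+1)})"
  then obtain c d where cd: "(c,d) \<in> iInv w - {(a,a+1)}" "p = (sw a c, sw a d)" by auto
  then show "p \<in> iInv (map (sw a) w) - {(a,a+1)}"
    using sw_less[of c d a] unfolding iInv_def
    by (auto simp: positions_map_sw set_map_sw sw_def split: if_splits)
qed

lemma card_iInv_sw: "card (iInv (map (sw a) w)) + (if (a,a+1) \<in> iInv w then 1 else 0)
   = card (iInv w) + (if (a,a+1) \<in> iInv (map (sw a) w) then 1 else 0)"
proof -
  have inj: "inj_on (\<lambda>(c,d). (sw a c, sw a d)) X" for X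
    by (rule inj_onI) (auto, metis sw_sw, metis sw_sw)
  have e: "card (iInv (map (sw a) w) - {(a,a+1)}) = card (iInv w - {(a,a+1)})"
    using iInv_sw[of a w] card_image[OF inj] by metis
  have c1: "card (iInv X) = card (iInv X - {(a,a+1)}) + (if (a,a+1) \<in> iInv X then 1 else 0)" for X
    using finite_iInv[of X] card.remove[of "iInv X" "(a,a+1)"] by auto
  show ?thesis using c1[of w] c1[of "map (sw a) w"] e by simp
qed

lemma pair_iInv_sw: "(a,a+1) \<in> iInv (map (sw a) w) \<longleftrightarrow>
   a \<in> set w \<and> a+1 \<in> set w \<and> Max (positions w a) < Min (positions w (a+1))"
  unfolding iInv_def by (auto simp: positions_map_sw set_map_sw sw_def)

lemma pair_iInv: "(a,a+1) \<in> iInv w \<longleftrightarrow>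
   a \<in> set w \<and> a+1 \<in> set w \<and> Max (positions w (a+1)) < Min (positions w a)"
  unfolding iInv_def by auto

lemma positions_fin: "finite (positions w x)" unfolding positions_def by auto
lemma positions_ne: "x \<in> set w \<Longrightarrow> positions w x \<noteq> {}"
  unfolding positions_def by (auto simp: in_set_conv_nth)

lemma minmax_before:
  assumes "x \<in> set w" "y \<in> set w" "x \<noteq> y"
  shows "(Max (positions w x) < Min (positions w y)) \<longleftrightarrow> before w x y"
proof
  assume m: "Max (positions w x) < Min (positions w y)"
  show "before w x y" unfolding before_def
  proof
    assume "\<exists>w1 w2. w = w1 @ w2 \<and> y \<in> set w1 \<and> x \<in> set w2"
    then obtain w1 w2 where ww: "w = w1 @ w2" "y \<in> set w1" "x \<in> set w2" by blast
    then obtain i where i: "i < length w1" "w1 ! i = y" by (auto simp: in_set_conv_nth)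
    obtain j where j: "j < length w2" "w2 ! j = x" using ww by (auto simp: in_set_conv_nth)
    have "i \<in> positions w y" using i ww unfolding positions_def by (auto simp: nth_append)
    then have "Min (positions w y) \<le> i" using positions_fin by simp
    moreover have "length w1 + j \<in> positions w x" using j ww unfolding positions_def by (auto simp: nth_append)
    then have "length w1 + j \<le> Max (positions w x)" using positions_fin by simp
    ultimately show False using m i by linarith
  qed
next
  assume b: "before w x y"
  show "Max (positions w x) < Min (positions w y)"
  proof (rule ccontr)
    assume nt: "\<not> ?thesis"
    define i where "i = Min (positions w y)"
    define j where "j = Max (positions w x)"
    have ii: "i \<in> positions w y" unfolding i_def using positions_fin positions_ne assms by simp
    have jj: "j \<in> positions w x" unfolding j_def using positions_fin positions_ne assms by simp
    have "i \<noteq> j" using ii jj assms(3) unfolding positions_def by auto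
    then have ij: "i < j" using nt i_def j_def by linarith
    have "y \<in> set (take (i+1) w)" using ii unfolding positions_def
      by (auto simp: in_set_conv_nth)
    moreover have "x \<in> set (drop (i+1) w)"
    proof -
      have jl: "j < length w" "w!j = x" using jj unfolding positions_def by auto
      have "drop (i+1) w ! (j - (i+1)) = x" using jl ij by simp
      moreover have "j - (i+1) < length (drop (i+1) w)" using jl ij by simp
      ultimately show ?thesis by (metis nth_mem)
    qed
    ultimately show False using b unfolding before_def by (metis append_take_drop_id)
  qed
qed


lemma cover_before: "card (iInv (map (sw a) w)) = card (iInv w) + 1 \<Longrightarrow>
   a \<in> set w \<and> a+1 \<in> set w \<and> before w a (a+1)"
  using card_iInv_sw[of a w] pair_iInv_sw[of a w] minmax_before[of a w "a+1"]
  by (auto split: if_splits)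

lemma before_cover: "a \<in> set w \<Longrightarrow> a+1 \<in> set w \<Longrightarrow> before w a (a+1) \<Longrightarrow>
   card (iInv (map (sw a) w)) = card (iInv w) + 1"
proof -
  assume as: "a \<in> set w" "a+1 \<in> set w" "before w a (a+1)"
  then have m: "Max (positions w a) < Min (positions w (a+1))" using minmax_before[of a w "a+1"] by simp
  have "Min (positions w a) \<le> Max (positions w a)"
    by (meson Max_ge Min_in positions_fin positions_ne as)
  moreover have "Min (positions w (a+1)) \<le> Max (positions w (a+1))"
    by (meson Max_ge Min_in positions_fin positions_ne as)
  ultimately have "(a,a+1) \<notin> iInv w" using m pair_iInv[of a w] by auto
  moreover have "(a,a+1) \<in> iInv (map (sw a) w)" using pair_iInv_sw[of a w] as m by simp
  ultimately show ?thesis using card_iInv_sw[of a w] by simp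
qed

lemma before_infix: "before (P @ v @ Q) x y \<Longrightarrow> before v x y"
  unfolding before_def
proof (intro notI, elim exE conjE)
  fix w1 w2 assume a: "\<not> (\<exists>w1 w2. P @ v @ Q = w1 @ w2 \<and> y \<in> set w1 \<and> x \<in> set w2)"
     "v = w1 @ w2" "y \<in> set w1" "x \<in> set w2"
  have "\<exists>w1' w2'. P @ v @ Q = w1' @ w2' \<and> y \<in> set w1' \<and> x \<in> set w2'"
    using a(2,3,4) by (intro exI[of _ "P @ w1"] exI[of _ "w2 @ Q"]) simp
  with a(1) show False by blast
qed

lemma before_split: assumes "w = P @ Q" "y \<notin> set P" "x \<notin> set Q" shows "before w x y"
  unfolding before_def
proof (intro notI, elim exE conjE)
  fix w1 w2 assume a: "w = w1 @ w2" "y \<in> set w1" "x \<in> set w2"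
  from a(1) assms(1) obtain us where "(w1 = P @ us \<and> us @ w2 = Q) \<or> (w1 @ us = P \<and> w2 = us @ Q)"
    by (auto simp: append_eq_append_conv2)
  then show False using a assms by auto
qed

lemma before_embed: "before v x y \<Longrightarrow> x \<notin> set P \<Longrightarrow> y \<notin> set P \<Longrightarrow> x \<notin> set Q \<Longrightarrow> y \<notin> set Q
   \<Longrightarrow> before (P @ v @ Q) x y"
  unfolding before_def
proof (clarify)
  fix w1 w2 assume a: "\<not> (\<exists>w1 w2. v = w1 @ w2 \<and> y \<in> set w1 \<and> x \<in> set w2)"
    "x \<notin> set P" "y \<notin> set P" "x \<notin> set Q" "y \<notin> set Q" "P @ v @ Q = w1 @ w2" "y \<in> set w1" "x \<in> set w2"
  from a(6) obtain us where "(w1 = P @ us \<and> us @ w2 = v @ Q) \<or> (w1 @ us = P \<and> w2 = us @ v @ Q)"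
    by (auto simp: append_eq_append_conv2)
  then show False
  proof
    assume b: "w1 = P @ us \<and> us @ w2 = v @ Q"
    then obtain vs where "(us = v @ vs \<and> vs @ w2 = Q) \<or> (us @ vs = v \<and> w2 = vs @ Q)"
      by (auto simp: append_eq_append_conv2)
    then show False using a b by auto
  next
    assume "w1 @ us = P \<and> w2 = us @ v @ Q"
    then show False using a by auto
  qed
qed

lemma wjoin_Cons2: "ys \<noteq> [] \<Longrightarrow> wjoin k (x # ys) = x @ [k] @ wjoin k ys"
  by (cases ys) auto

lemma wjoin_append: "xs \<noteq> [] \<Longrightarrow> ys \<noteq> [] \<Longrightarrow> wjoin k (xs @ ys) = wjoin k xs @ [k] @ wjoin k ys"
proof (induction xs)
  case Nil then show ?case by simp
next
  case (Cons x xs)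
  show ?case
  proof (cases "xs = []")
    case True then show ?thesis using Cons by (simp add: wjoin_Cons2)
  next
    case False then show ?thesis using Cons by (simp add: wjoin_Cons2)
  qed
qed

lemma set_wjoin_sub: "set (wjoin k ws) \<subseteq> insert k (\<Union>w\<in>set ws. set w)"
  by (induction k ws rule: wjoin.induct) auto

lemma set_wjoin_mem: "w \<in> set ws \<Longrightarrow> set w \<subseteq> set (wjoin k ws)"
  by (induction k ws rule: wjoin.induct) auto

lemma set_word_sub: "set (word g) \<subseteq> set (labels g)"
proof (induction g)
  case LLeaf then show ?case by simp
next
  case (LNode k cs)
  then show ?case using set_wjoin_sub[of k "map word cs"] by fastforce
qed

lemma wjoin_infix: "\<exists>P Q. wjoin k (xs @ y # zs) = P @ y @ Q \<and> set P \<subseteq> insert k (\<Union>w\<in>set xs. set w)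
   \<and> set Q \<subseteq> insert k (\<Union>w\<in>set zs. set w)"
proof (induction xs)
  case Nil
  show ?case
  proof (cases "zs = []")
    case True then show ?thesis by (intro exI[of _ "[]"]) auto
  next
    case False then show ?thesis using set_wjoin_sub[of k zs]
      by (intro exI[of _ "[]"] exI[of _ "[k] @ wjoin k zs"]) (auto simp: wjoin_Cons2)
  qed
next
  case (Cons x xs)
  then obtain P Q where pq: "wjoin k (xs @ y # zs) = P @ y @ Q" "set P \<subseteq> insert k (\<Union>w\<in>set xs. set w)"
   "set Q \<subseteq> insert k (\<Union>w\<in>set zs. set w)" by blast
  show ?case using pq
    by (intro exI[of _ "x @ [k] @ P"] exI[of _ Q]) (auto simp: wjoin_Cons2)
qed

lemma map_sw_id: "a \<notin> set xs \<Longrightarrow> a+1 \<notin> set xs \<Longrightarrow> map (sw a) xs = xs"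
  by (induction xs) auto

lemma map_sw_word_id: "a \<notin> set (labels c) \<Longrightarrow> a+1 \<notin> set (labels c) \<Longrightarrow> map (sw a) (word c) = word c"
  using set_word_sub[of c] by (intro map_sw_id) auto

lemma map_sw_words_id: "\<forall>c\<in>set cs. a \<notin> set (labels c) \<and> a+1 \<notin> set (labels c) \<Longrightarrow>
  map (map (sw a)) (map word cs) = map word cs"
  by (induction cs) (auto simp: map_sw_word_id)

lemma map_sw_labels_id: "\<forall>c\<in>set cs. a \<notin> set (labels c) \<and> a+1 \<notin> set (labels c) \<Longrightarrow>
  map (sw a) (concat (map labels cs)) = concat (map labels cs)"
  by (induction cs) (auto simp: map_sw_id)

lemma inc_relabel: "increasing g \<Longrightarrow> \<not> (a \<in> set (labels g) \<and> a+1 \<in> set (labels g)) \<Longrightarrow>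
   increasing (relabel (sw a) g)"
proof (induction g)
  case LLeaf then show ?case by simp
next
  case (LNode k cs)
  show ?case
  proof (simp, intro ballI conjI)
    fix c assume c: "c \<in> set cs"
    have sub: "set (labels c) \<subseteq> set (labels (LNode k cs))" using c by auto
    show "increasing (relabel (sw a) c)" using LNode.IH[OF c] LNode.prems c sub by auto
    show "case relabel (sw a) c of LLeaf \<Rightarrow> True | LNode j x \<Rightarrow> sw a k < j"
    proof (cases c)
      case LLeaf then show ?thesis by simp
    next
      case (LNode j ds)
      have kj: "k < j" using LNode.prems(1) c LNode by auto
      have jl: "j \<in> set (labels c)" using LNode by simp
      have "sw a k < sw a j"
      proof (cases "k = a")
        case True
        then have "a+1 \<notin> set (labels c)" using LNode.prems(2) sub by auto
        then show ?thesis using True kj jl by (auto simp: sw_def)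
      next
        case False
        note F = False
        show ?thesis
        proof (cases "k = a+1")
          case True
          then have "a \<notin> set (labels c)" using LNode.prems(2) sub by auto
          then show ?thesis using True kj jl by (auto simp: sw_def)
        next
          case False
          then show ?thesis using F kj by (auto simp: sw_def)
        qed
      qed
      then show ?thesis using LNode by simp
    qed
  qed
qed


lemma dist_disj: "distinct (concat (map labels (l @ c # r))) \<Longrightarrow> x \<in> set l \<union> set r \<Longrightarrow>
   set (labels c) \<inter> set (labels x) = {}"
  by (auto simp: distinct_append)

lemma step_rot:
  assumes "lwf g" "increasing g" "distinct (labels g)" "a \<in> set (labels g)" "a+1 \<in> set (labels g)"
    "before (word g) a (a+1)"
  shows "\<exists>h. lwf h \<and> increasing h \<and> mset (labels h) = mset (map (sw a) (labels g))
     \<and> word h = map (sw a) (word g) \<and> (pi h = pi g \<or> left_rot (pi g) (pi h))"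
  using assms
proof (induction g)
  case LLeaf then show ?case by simp
next
  case (LNode k cs)
  have lw: "2 \<le> length cs" "\<forall>c\<in>set cs. lwf c" using LNode.prems by auto
  have inc: "\<forall>c\<in>set cs. increasing c" using LNode.prems by auto
  have dist: "k \<notin> set (concat (map labels cs))" "distinct (concat (map labels cs))"
    using LNode.prems by auto
  have gt: "\<And>c x. c \<in> set cs \<Longrightarrow> x \<in> set (labels c) \<Longrightarrow> k < x"
    using inc_gt LNode.prems(2) by blast
  consider "k = a" | "k = a+1" | "k \<noteq> a \<and> k \<noteq> a+1" by blast
  then show ?case
  proof cases
    case 1
    then have "a+1 \<in> set (concat (map labels cs))" using LNode.prems by auto
    then obtain c where c: "c \<in> set cs" "a+1 \<in> set (labels c)" by auto
    then obtain l r where lr: "cs = l @ c # r" by (meson split_list)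
    obtain j ds where cj: "c = LNode j ds" using c(2) by (cases c) auto
    have "k < j" using LNode.prems(2) c(1) cj by auto
    have j: "j = a+1"
    proof (rule ccontr)
      assume "j \<noteq> a+1"
      then have "a+1 \<in> set (concat (map labels ds))" using c cj by auto
      then have "j < a+1" using inc_gt[of j ds] inc c cj by auto
      then show False using \<open>k < j\<close> 1 by simp
    qed
    have r: "r = []"
    proof (rule ccontr)
      assume "r \<noteq> []"
      have "word (LNode k cs) = wjoin a (map word l @ [word c]) @ [a] @ wjoin a (map word r)"
        using wjoin_append[of "map word l @ [word c]" "map word r" a] lr 1 \<open>r \<noteq> []\<close> by simp
      moreover have "a+1 \<in> set (wjoin a (map word l @ [word c]))"
      proof -
        have "lwf c" using lw c by auto
        then have "a+1 \<in> set (word c)" using root_in_word[of j ds] cj j by simp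
        then show ?thesis using set_wjoin_mem[of "word c" "map word l @ [word c]" a] by auto
      qed
      ultimately show False using LNode.prems(6) unfolding before_def by force
    qed
    have "l \<noteq> []" using lw(1) lr r by auto
    have "lwf c" using lw c by auto
    then have "2 \<le> length ds" using cj by auto
    then obtain d1 ds' where ds0: "ds = d1 # ds'" by (cases ds) auto
    have ds: "ds = d1 # ds'" "ds' \<noteq> []" using ds0 \<open>2 \<le> length ds\<close> by auto
    have dl: "\<forall>x\<in>set l. a \<notin> set (labels x) \<and> a+1 \<notin> set (labels x)"
      using gt dist lr 1 cj j by fastforce
    have dd: "\<forall>x\<in>set ds. a \<notin> set (labels x) \<and> a+1 \<notin> set (labels x)"
      using gt dist lr 1 cj j c by fastforce
    define h where "h = LNode a (LNode (a+1) (l @ [d1]) # ds')"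
    have wg: "word (LNode k cs) = wjoin a (map word l) @ [a] @ word d1 @ [a+1] @ wjoin (a+1) (map word ds')"
      using lr r 1 cj j ds \<open>l \<noteq> []\<close> by (simp add: wjoin_append wjoin_Cons2)
    have wh: "word h = wjoin (a+1) (map word l) @ [a+1] @ word d1 @ [a] @ wjoin a (map word ds')"
      using ds \<open>l \<noteq> []\<close> unfolding h_def by (simp add: wjoin_append wjoin_Cons2)
    have e1: "map (sw a) (wjoin a (map word l)) = wjoin (a+1) (map word l)"
    proof -
      have "map (map (sw a)) (map word l) = map word l" using map_sw_words_id[of l a] dl by blast
      then show ?thesis by (simp only: map_wjoin) (simp add: sw_def)
    qed
    have e2: "map (sw a) (wjoin (a+1) (map word ds')) = wjoin a (map word ds')"
    proof -
      have "map (map (sw a)) (map word ds') = map word ds'" using map_sw_words_id[of ds' a] dd ds by simp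
      then show ?thesis by (simp only: map_wjoin) (simp add: sw_def)
    qed
    have e3: "map (sw a) (word d1) = word d1" using map_sw_word_id dd ds by auto
    have "word h = map (sw a) (word (LNode k cs))"
      using wg wh e1 e2 e3 by (simp add: sw_def)
    have incc: "increasing c" using inc c by auto
    have lwfc: "lwf c" using lw c by auto
    have lwfh: "lwf h" unfolding h_def using lw lwfc lr cj ds \<open>l \<noteq> []\<close> by (auto simp: Suc_le_eq)
    have incl: "\<forall>x\<in>set l. increasing x \<and> (case x of LLeaf \<Rightarrow> True | LNode j _ \<Rightarrow> a+1 < j)"
    proof
      fix x assume x: "x \<in> set l"
      have "increasing x" "case x of LLeaf \<Rightarrow> True | LNode j _ \<Rightarrow> a < j"
        using LNode.prems(2) x lr 1 by auto
      moreover have "a+1 \<notin> set (labels x)" using dl x by auto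
      ultimately show "increasing x \<and> (case x of LLeaf \<Rightarrow> True | LNode j _ \<Rightarrow> a+1 < j)"
        by (cases x) auto
    qed
    have inch: "increasing h" unfolding h_def using incl incc cj j ds by (auto split: ltree.splits)
    have mh: "mset (labels h) = mset (map (sw a) (labels (LNode k cs)))"
    proof -
      have "map (sw a) (concat (map labels l)) = concat (map labels l)" using map_sw_labels_id dl by blast
      moreover have "map (sw a) (concat (map labels ds')) = concat (map labels ds')"
        using map_sw_labels_id dd ds by simp
      moreover have "map (sw a) (labels d1) = labels d1" using map_sw_id dd ds by simp
      ultimately show ?thesis unfolding h_def using lr r 1 cj j ds by (simp add: sw_def add_mset_commute)
    qed
    have "left_rot (pi (LNode k cs)) (pi h)"
      using left_rot.root[of "map pi l" "map pi ds'" "pi d1"] \<open>l \<noteq> []\<close> ds lr r cj j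
      unfolding h_def by simp
    then show ?thesis using lwfh inch mh \<open>word h = map (sw a) (word (LNode k cs))\<close> by blast
  next
    case 2
    then have "a \<in> set (concat (map labels cs))" using LNode.prems by auto
    then obtain c where "c \<in> set cs" "a \<in> set (labels c)" by auto
    then have "k < a" using gt by blast
    then show ?thesis using 2 by simp
  next
    case 3
    have aa: "a \<in> set (concat (map labels cs))" "a+1 \<in> set (concat (map labels cs))"
      using 3 LNode.prems by auto
    then obtain c0 where "c0 \<in> set cs" "a \<in> set (labels c0)" by auto
    then have ka: "k < a" using gt by blast
    have swk: "sw a k = k" using 3 by (simp add: sw_def)
    show ?thesis
    proof (cases "\<exists>c\<in>set cs. a \<in> set (labels c) \<and> a+1 \<in> set (labels c)")
      case True
      then obtain c where c: "c \<in> set cs" "a \<in> set (labels c)" "a+1 \<in> set (labels c)" by blast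
      then obtain l r where lr: "cs = l @ c # r" by (meson split_list)
      have dlr: "\<forall>x\<in>set l \<union> set r. a \<notin> set (labels x) \<and> a+1 \<notin> set (labels x)"
        using dist_disj[of l c r] dist(2) lr c by blast
      obtain P Q where PQ: "word (LNode k cs) = P @ word c @ Q"
        using wjoin_infix[of k "map word l" "word c" "map word r"] lr by auto
      have bc: "before (word c) a (a+1)" using before_infix LNode.prems(6) PQ by metis
      have dc: "distinct (labels c)" using dist(2) c(1) by (simp add: distinct_concat_iff)
      obtain hc where hc: "lwf hc" "increasing hc" "mset (labels hc) = mset (map (sw a) (labels c))"
        "word hc = map (sw a) (word c)" "pi hc = pi c \<or> left_rot (pi c) (pi hc)"
        using LNode.IH[OF c(1)] lw inc c dc bc by blast
      define h where "h = LNode k (l @ hc # r)"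
      have lwfh: "lwf h" unfolding h_def using lw lr hc(1) by auto
      have sethc: "set (labels hc) = sw a ` set (labels c)"
        using hc(3) by (metis mset_map set_mset_mset set_image_mset)
      have "\<forall>x\<in>set (labels hc). k < x"
      proof
        fix x assume "x \<in> set (labels hc)"
        then obtain y where "y \<in> set (labels c)" "x = sw a y" using sethc by auto
        then have "k < y" using gt c(1) by blast
        then show "k < x" using \<open>x = sw a y\<close> ka by (auto simp: sw_def)
      qed
      then have "case hc of LLeaf \<Rightarrow> True | LNode j _ \<Rightarrow> k < j" by (cases hc) auto
      then have inch: "increasing h" unfolding h_def using LNode.prems(2) lr hc(2) by auto
      have ml: "map (sw a) (concat (map labels l)) = concat (map labels l)"
        using map_sw_labels_id dlr by blast
      have mr: "map (sw a) (concat (map labels r)) = concat (map labels r)"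
        using map_sw_labels_id dlr by blast
      have mh: "mset (labels h) = mset (map (sw a) (labels (LNode k cs)))"
        unfolding h_def using lr hc(3) ml mr swk by simp
      have wl: "map (map (sw a)) (map word l) = map word l" using map_sw_words_id dlr by blast
      have wr: "map (map (sw a)) (map word r) = map word r" using map_sw_words_id dlr by blast
      have wh: "word h = map (sw a) (word (LNode k cs))"
      proof -
        have "map (sw a) (word (LNode k cs)) = wjoin k (map (map (sw a)) (map word l @ word c # map word r))"
          using lr swk by (simp only: word.simps map_wjoin map_append list.map)
        also have "\<dots> = wjoin k (map word l @ word hc # map word r)"
          using wl wr hc(4) by (simp del: map_map)
        finally show ?thesis unfolding h_def by simp
      qed
      have "pi h = pi (LNode k cs) \<or> left_rot (pi (LNode k cs)) (pi h)"
        using hc(5) lr unfolding h_def by (auto intro: left_rot.sub)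
      then show ?thesis using lwfh inch mh wh by blast
    next
      case False
      define h where "h = relabel (sw a) (LNode k cs)"
      have "increasing h" unfolding h_def
      proof (simp, intro ballI conjI)
        fix c assume c: "c \<in> set cs"
        show "increasing (relabel (sw a) c)" using inc_relabel inc c False by blast
        show "case relabel (sw a) c of LLeaf \<Rightarrow> True | LNode j x \<Rightarrow> sw a k < j"
        proof (cases c)
          case LLeaf then show ?thesis by simp
        next
          case (LNode j ds)
          then have "k < j" using gt c by auto
          then show ?thesis using LNode ka swk by (auto simp: sw_def)
        qed
      qed
      moreover have "lwf h" unfolding h_def using LNode.prems(1) lwf_relabel by blast
      ultimately show ?thesis unfolding h_def
        by (intro exI[of _ h]) (simp add: h_def labels_relabel word_relabel pi_relabel del: relabel.simps)
    qed
  qed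
qed


lemma sep_inj: "k \<notin> set x \<Longrightarrow> k \<notin> set x' \<Longrightarrow> x @ k # R = x' @ k # R' \<Longrightarrow> x = x' \<and> R = R'"
proof (induction x arbitrary: x')
  case Nil then show ?case by (cases x') auto
next
  case (Cons y x) then show ?case by (cases x') auto
qed

lemma wjoin_inj: "\<forall>w\<in>set ws. k \<notin> set w \<Longrightarrow> \<forall>w\<in>set ws'. k \<notin> set w \<Longrightarrow> ws \<noteq> [] \<Longrightarrow> ws' \<noteq> []
  \<Longrightarrow> wjoin k ws = wjoin k ws' \<Longrightarrow> ws = ws'"
proof (induction ws arbitrary: ws')
  case Nil then show ?case by simp
next
  case (Cons x xs)
  obtain x' xs' where ws': "ws' = x' # xs'" using Cons.prems(4) by (cases ws') auto
  have kx: "k \<notin> set x" "k \<notin> set x'" using Cons.prems(1,2) ws' by auto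
  have e: "wjoin k (x # xs) = wjoin k (x' # xs')" using Cons.prems(5) ws' by simp
  show ?case
  proof (cases "xs = []")
    case True
    show ?thesis
    proof (cases "xs' = []")
      case True then show ?thesis using \<open>xs = []\<close> ws' e by simp
    next
      case False
      then have "x = x' @ [k] @ wjoin k xs'" using \<open>xs = []\<close> e by (simp add: wjoin_Cons2)
      then have "k \<in> set x" by simp
      then show ?thesis using kx by simp
    qed
  next
    case False
    show ?thesis
    proof (cases "xs' = []")
      case True
      then have "x' = x @ [k] @ wjoin k xs" using False e by (simp add: wjoin_Cons2)
      then have "k \<in> set x'" by simp
      then show ?thesis using kx by simp
    next
      case F': False
      then have "x @ k # wjoin k xs = x' @ k # wjoin k xs'" using False e by (simp add: wjoin_Cons2)
      then have xx: "x = x'" "wjoin k xs = wjoin k xs'" using sep_inj[of k x x'] kx by auto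
      have "\<forall>w\<in>set xs. k \<notin> set w" "\<forall>w\<in>set xs'. k \<notin> set w" using Cons.prems(1,2) ws' by auto
      then have "xs = xs'" using Cons.IH[of xs'] xx(2) False F' by blast
      then show ?thesis using xx ws' by simp
    qed
  qed
qed

lemma word_ge_root: "increasing (LNode k cs) \<Longrightarrow> x \<in> set (word (LNode k cs)) \<Longrightarrow> k \<le> x"
proof -
  assume inc: "increasing (LNode k cs)" and x: "x \<in> set (word (LNode k cs))"
  then have "x \<in> set (labels (LNode k cs))" using set_word_sub by blast
  then show "k \<le> x" using inc_gt[OF inc] by fastforce
qed

lemma root_notin_child_word: "increasing (LNode k cs) \<Longrightarrow> c \<in> set cs \<Longrightarrow> k \<notin> set (word c)"
  using inc_gt set_word_sub by blast

lemma word_inj: "lwf g \<Longrightarrow> increasing g \<Longrightarrow> lwf g' \<Longrightarrow> increasing g' \<Longrightarrow> word g = word g' \<Longrightarrow> g = g'"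
proof (induction g arbitrary: g')
  case LLeaf
  show ?case
  proof (cases g')
    case (LNode k cs)
    have "lwf (LNode k cs)" using LLeaf.prems LNode by simp
    then have "k \<in> set (word (LNode k cs))" by (rule root_in_word)
    then show ?thesis using LLeaf.prems LNode by (metis empty_iff empty_set word.simps(1))
  qed simp
next
  case (LNode k cs)
  obtain k' cs' where g': "g' = LNode k' cs'"
    using LNode.prems root_in_word[of k cs] by (cases g') auto
  have "k \<in> set (word g')" "k' \<in> set (word (LNode k cs))"
    using LNode.prems root_in_word[of k cs] root_in_word[of k' cs'] g' by auto
  then have kk: "k = k'" using word_ge_root[of k cs] word_ge_root[of k' cs'] LNode.prems g' by force
  have "map word cs = map word cs'"
    apply (rule wjoin_inj[of _ k])
    using LNode.prems g' kk root_notin_child_word[of k cs] root_notin_child_word[of k cs'] by auto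
  then have len: "length cs = length cs'" by (metis length_map)
  have "cs = cs'"
  proof (rule nth_equalityI[OF len])
    fix i assume i: "i < length cs"
    have "word (cs ! i) = word (cs' ! i)" using \<open>map word cs = map word cs'\<close> i len by (metis nth_map)
    then show "cs ! i = cs' ! i" using LNode.IH[of "cs ! i" "cs' ! i"] LNode.prems g' i len by auto
  qed
  then show ?case using kk g' by simp
qed

lemma set_sw_interval: "a \<in> {1..N} \<Longrightarrow> a+1 \<in> {1..N} \<Longrightarrow> sw a ` {1..(N::nat)} = {1..N}"
proof -
  assume a: "a \<in> {1..N}" "a+1 \<in> {1..N}"
  have m: "x \<in> {1..N} \<Longrightarrow> sw a x \<in> {1..N}" for x using a by (simp add: sw_def)
  show ?thesis
  proof
    show "sw a ` {1..N} \<subseteq> {1..N}" using m by blast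
    show "{1..N} \<subseteq> sw a ` {1..N}"
    proof
      fix x assume "x \<in> {1..N}"
      then have "sw a x \<in> {1..N}" by (rule m)
      then show "x \<in> sw a ` {1..N}" by (metis image_eqI sw_sw)
    qed
  qed
qed

lemma gsp_sw:
  assumes "gsp h" "a \<in> set (labels h)" "a+1 \<in> set (labels h)" "lwf h'" "increasing h'"
    "mset (labels h') = mset (map (sw a) (labels h))"
  shows "gsp h'"
proof -
  have "length (labels h') = length (map (sw a) (labels h))" using assms(6) by (rule mset_eq_length)
  then have len: "length (labels h') = length (labels h)" by simp
  have "inj_on (sw a) (set (labels h))" using inj_on_subset[OF inj_sw subset_UNIV] by blast
  then have "distinct (map (sw a) (labels h))" using assms(1) unfolding gsp_def
    by (simp add: distinct_map)
  then have d: "distinct (labels h')" using mset_eq_imp_distinct_iff[OF assms(6)] by simp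
  have "set (labels h') = set (map (sw a) (labels h))" using assms(6) by (rule mset_eq_setD)
  also have "\<dots> = sw a ` {1..length (labels h)}" using assms(1) unfolding gsp_def by simp
  also have "\<dots> = {1..length (labels h)}"
    using assms(1,2,3) set_sw_interval[of a "length (labels h)"] unfolding gsp_def by simp
  finally show ?thesis using d len assms(4,5) unfolding gsp_def by simp
qed

lemma packed_word: "gsp g \<Longrightarrow> packed (word g)"
proof -
  assume g: "gsp g"
  then have "set (word g) = set (labels g)" using set_word unfolding gsp_def by blast
  moreover have "card (set (labels g)) = length (labels g)" using g unfolding gsp_def by (simp add: distinct_card)
  ultimately show ?thesis using g unfolding packed_def gsp_def by simp
qed

lemma chain1: "pw_le x y \<Longrightarrow> gsp g \<Longrightarrow> word g = x \<Longrightarrow> \<exists>h. gsp h \<and> word h = y \<and> pt_le (pi g) (pi h)"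
  unfolding pw_le_def
proof (induction rule: rtranclp_induct)
  case base
  then show ?case unfolding pt_le_def by auto
next
  case (step y z)
  then obtain h where h: "gsp h" "word h = y" "pt_le (pi g) (pi h)" by blast
  from step(2) obtain a where a: "y = Tswap a z" "card (iInv z) = card (iInv y) + 1"
    unfolding pw_cover_def by blast
  have z: "z = map (sw a) y" using a(1) Tswap_invol by (metis Tswap_sw)
  then have "a \<in> set y \<and> a+1 \<in> set y \<and> before y a (a+1)" using cover_before a(2) by simp
  moreover have "set y = set (labels h)" using h set_word unfolding gsp_def by blast
  ultimately have ab: "a \<in> set (labels h)" "a+1 \<in> set (labels h)" "before (word h) a (a+1)" using h by auto
  obtain h' where h': "lwf h'" "increasing h'" "mset (labels h') = mset (map (sw a) (labels h))"
     "word h' = map (sw a) (word h)" "pi h' = pi h \<or> left_rot (pi h) (pi h')"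
    using step_rot[of h a] h(1) ab unfolding gsp_def by blast
  have "gsp h'" using gsp_sw[OF h(1) ab(1,2) h'(1,2,3)] .
  moreover have "word h' = z" using h'(4) h(2) z by simp
  moreover have "pt_le (pi g) (pi h')" using h(3) h'(5) unfolding pt_le_def by auto
  ultimately show ?case by blast
qed

lemma part1: "gsp u \<Longrightarrow> gsp v \<Longrightarrow> gsp_le u v \<Longrightarrow> pt_le (pi u) (pi v)"
proof -
  assume u: "gsp u" and v: "gsp v" and le: "gsp_le u v"
  then obtain h where h: "gsp h" "word h = word v" "pt_le (pi u) (pi h)"
    using chain1[of "word u" "word v" u] unfolding gsp_le_def by blast
  then have "h = v" using word_inj v unfolding gsp_def by blast
  then show ?thesis using h by simp
qed




fun nint :: "ptree \<Rightarrow> nat" where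
  "nint Leaf = 0"
| "nint (Node cs) = Suc (sum_list (map nint cs))"

fun rpo :: "nat \<Rightarrow> ptree \<Rightarrow> ltree" and rpos :: "nat \<Rightarrow> ptree list \<Rightarrow> ltree list" where
  "rpo n Leaf = LLeaf"
| "rpo n (Node cs) = LNode n (rpos (Suc n) cs)"
| "rpos n [] = []"
| "rpos n (c # cs) = rpo (n + sum_list (map nint cs)) c # rpos n cs"

lemma len_labels: "length (labels g) = nint (pi g)"
  by (induction g) (simp_all add: length_concat comp_def cong: map_cong)

lemma rpo_facts:
  shows "pi (rpo n t) = t \<and> length (labels (rpo n t)) = nint t \<and> distinct (labels (rpo n t))
     \<and> set (labels (rpo n t)) = {n..<n + nint t}"
    and "map pi (rpos n cs) = cs \<and> distinct (concat (map labels (rpos n cs)))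
     \<and> set (concat (map labels (rpos n cs))) = {n..<n + sum_list (map nint cs)}"
proof (induction n t and n cs rule: rpo_rpos.induct)
  case (1 n) then show ?case by simp
next
  case (2 n cs)
  have "length (concat (map labels (rpos (Suc n) cs))) = sum_list (map nint cs)"
    using 2 distinct_card[of "concat (map labels (rpos (Suc n) cs))"] by simp
  then show ?case using 2 by auto
next
  case (3 n) then show ?case by simp
next
  case (4 n c cs)
  have d: "set (labels (rpo (n + sum_list (map nint cs)) c)) \<inter> set (concat (map labels (rpos n cs))) = {}"
    using 4 by auto
  show ?case using 4 d by auto
qed


lemma rpo_lwf:
  shows "ptree_wf t \<Longrightarrow> lwf (rpo n t)"
    and "\<forall>c\<in>set cs. ptree_wf c \<Longrightarrow> (\<forall>x\<in>set (rpos n cs). lwf x) \<and> length (rpos n cs) = length cs"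
  by (induction n t and n cs rule: rpo_rpos.induct) auto

lemma rpo_inc:
  shows "increasing (rpo n t)"
    and "\<forall>x\<in>set (rpos n cs). increasing x \<and> (case x of LLeaf \<Rightarrow> True | LNode j _ \<Rightarrow> n \<le> j)"
proof (induction n t and n cs rule: rpo_rpos.induct)
  case (2 n cs) then show ?case by (auto split: ltree.splits)
next
  case (4 n c cs)
  have "case rpo (n + sum_list (map nint cs)) c of LLeaf \<Rightarrow> True | LNode j _ \<Rightarrow> n \<le> j"
    by (cases c) auto
  then show ?case using 4 by auto
qed auto

fun lcp :: "ltree \<Rightarrow> bool" where
  "lcp LLeaf = True"
| "lcp (LNode k cs) = ((\<forall>c\<in>set cs. lcp c) \<and>
     (cs \<noteq> [] \<longrightarrow> (case last cs of LLeaf \<Rightarrow> True | LNode j _ \<Rightarrow> j = Suc k)))"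

lemma last_rpos: "cs \<noteq> [] \<Longrightarrow> last (rpos n cs) = rpo n (last cs)"
proof (induction cs)
  case Nil then show ?case by simp
next
  case (Cons c cs)
  show ?case
  proof (cases "cs = []")
    case True then show ?thesis by simp
  next
    case False
    then have "rpos n cs \<noteq> []" by (cases cs) auto
    then show ?thesis using Cons False by simp
  qed
qed

lemma rpo_lcp:
  shows "lcp (rpo n t)" and "\<forall>x\<in>set (rpos n cs). lcp x"
proof (induction n t and n cs rule: rpo_rpos.induct)
  case (2 n cs)
  show ?case
  proof (cases "cs = []")
    case True then show ?thesis by simp
  next
    case False
    then have "rpos (Suc n) cs \<noteq> []" by (cases cs) auto
    moreover have "case rpo (Suc n) (last cs) of LLeaf \<Rightarrow> True | LNode j _ \<Rightarrow> j = Suc n"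
      by (cases "last cs") auto
    ultimately show ?thesis using 2 False last_rpos by auto
  qed
qed auto

definition avoids :: "nat list \<Rightarrow> bool" where
  "avoids w \<longleftrightarrow> (\<forall>i j k. i < j \<longrightarrow> j < k \<longrightarrow> k < length w \<longrightarrow> \<not> (w ! k > w ! i \<and> w ! i > w ! j))"

lemma avoids_eq: "avoids213 w = avoids w"
  unfolding avoids213_def avoids_def by blast

lemma av_infix: "avoids (P @ V @ Q) \<Longrightarrow> avoids V"
  unfolding avoids_def
proof (intro allI impI notI)
  fix i j k assume a: "\<forall>i j k. i < j \<longrightarrow> j < k \<longrightarrow> k < length (P @ V @ Q) \<longrightarrow>
      \<not> ((P @ V @ Q) ! i < (P @ V @ Q) ! k \<and> (P @ V @ Q) ! j < (P @ V @ Q) ! i)"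
    and ijk: "i < j" "j < k" "k < length V" "V ! i < V ! k \<and> V ! j < V ! i"
  have "\<And>m. m < length V \<Longrightarrow> (P @ V @ Q) ! (length P + m) = V ! m" by (simp add: nth_append)
  then show False using a[rule_format, of "length P + i" "length P + j" "length P + k"] ijk by auto
qed

lemma av_app: "avoids X \<Longrightarrow> avoids Y \<Longrightarrow> (\<forall>x\<in>set X. \<forall>y\<in>set Y. y < x) \<Longrightarrow> avoids (X @ Y)"
  unfolding avoids_def
proof (intro allI impI notI)
  fix i j k assume aX: "\<forall>i j k. i < j \<longrightarrow> j < k \<longrightarrow> k < length X \<longrightarrow> \<not> (X ! i < X ! k \<and> X ! j < X ! i)"
    and aY: "\<forall>i j k. i < j \<longrightarrow> j < k \<longrightarrow> k < length Y \<longrightarrow> \<not> (Y ! i < Y ! k \<and> Y ! j < Y ! i)"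
    and lt: "\<forall>x\<in>set X. \<forall>y\<in>set Y. y < x"
    and ijk: "i < j" "j < k" "k < length (X @ Y)" "(X @ Y) ! i < (X @ Y) ! k \<and> (X @ Y) ! j < (X @ Y) ! i"
  show False
  proof (cases "k < length X")
    case True
    then show False using aX[rule_format, of i j k] ijk by (auto simp: nth_append)
  next
    case False
    show False
    proof (cases "i < length X")
      case True
      have "(X @ Y) ! i \<in> set X" using True by (simp add: nth_append)
      moreover have "(X @ Y) ! k \<in> set Y" using False ijk(3) by (simp add: nth_append)
      ultimately show False using lt ijk(4) by fastforce
    next
      case F2: False
      have l: "i - length X < j - length X" "j - length X < k - length X" "k - length X < length Y"
        using ijk F2 False by auto
      show False using aY[rule_format, OF l] ijk F2 False by (auto simp: nth_append)
    qed
  qed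
qed

lemma av_cons: "avoids V \<Longrightarrow> (\<forall>v\<in>set V. n \<le> v) \<Longrightarrow> avoids (n # V)"
  unfolding avoids_def
proof (intro allI impI notI)
  fix i j k assume aV: "\<forall>i j k. i < j \<longrightarrow> j < k \<longrightarrow> k < length V \<longrightarrow> \<not> (V ! i < V ! k \<and> V ! j < V ! i)"
    and lt: "\<forall>v\<in>set V. n \<le> v"
    and ijk: "i < j" "j < k" "k < length (n # V)" "(n # V) ! i < (n # V) ! k \<and> (n # V) ! j < (n # V) ! i"
  show False
  proof (cases i)
    case 0
    obtain j' where "j = Suc j'" using ijk 0 by (cases j) auto
    then have "(n # V) ! j \<in> set V" using ijk by simp
    then show False using lt ijk 0 by fastforce
  next
    case (Suc i')
    obtain j' where j': "j = Suc j'" using ijk Suc by (cases j) auto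
    obtain k' where k': "k = Suc k'" using ijk by (cases k) auto
    show False using aV[rule_format, of i' j' k'] ijk Suc j' k' by auto
  qed
qed

lemma av_sep: "avoids (X @ [k] @ Y) \<Longrightarrow> x \<in> set X \<Longrightarrow> y \<in> set Y \<Longrightarrow> k < x \<Longrightarrow> y \<le> x"
proof (rule ccontr)
  assume a: "avoids (X @ [k] @ Y)" "x \<in> set X" "y \<in> set Y" "k < x" "\<not> y \<le> x"
  obtain i where i: "i < length X" "X ! i = x" using a(2) by (auto simp: in_set_conv_nth)
  obtain j where j: "j < length Y" "Y ! j = y" using a(3) by (auto simp: in_set_conv_nth)
  have "(X @ [k] @ Y) ! i = x" using i by (simp add: nth_append)
  moreover have "(X @ [k] @ Y) ! (length X) = k" by (simp add: nth_append)
  moreover have "(X @ [k] @ Y) ! (length X + 1 + j) = y" using j by (simp add: nth_append)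
  moreover have "i < length X" "length X < length X + 1 + j" "length X + 1 + j < length (X @ [k] @ Y)"
    using i j by auto
  ultimately show False using a(1)[unfolded avoids_def, rule_format, of i "length X" "length X + 1 + j"]
    a(4,5) by auto
qed

fun stw :: "nat list list \<Rightarrow> bool" where
  "stw [] = True"
| "stw (w # ws) = ((\<forall>x\<in>set w. \<forall>v\<in>set ws. \<forall>y\<in>set v. y \<le> x) \<and> stw ws)"

lemma av_wjoin: "\<forall>w\<in>set ws. avoids w \<Longrightarrow> \<forall>w\<in>set ws. \<forall>v\<in>set w. n < v \<Longrightarrow>
  (\<forall>i j. i < j \<longrightarrow> j < length ws \<longrightarrow> (\<forall>x\<in>set (ws!i). \<forall>y\<in>set (ws!j). y < x)) \<Longrightarrow> avoids (wjoin n ws)"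
proof (induction n ws rule: wjoin.induct)
  case (1 k) then show ?case by (simp add: avoids_def)
next
  case (2 k x) then show ?case by simp
next
  case (3 k x y r)
  have IH: "avoids (wjoin k (y # r))"
  proof (rule 3(1))
    show "\<forall>i j. i < j \<longrightarrow> j < length (y # r) \<longrightarrow> (\<forall>x\<in>set ((y # r) ! i). \<forall>ya\<in>set ((y # r) ! j). ya < x)"
    proof (intro allI impI)
      fix i j assume "i < j" "j < length (y # r)"
      then show "\<forall>x\<in>set ((y # r) ! i). \<forall>ya\<in>set ((y # r) ! j). ya < x"
        using 3(4)[rule_format, of "Suc i" "Suc j"] by simp
    qed
  next
    show "\<forall>w\<in>set (y # r). avoids w" using 3(2) by simp
  next
    show "\<forall>w\<in>set (y # r). \<forall>v\<in>set w. k < v" using 3(3) by simp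
  qed
  have sub: "set (wjoin k (y # r)) \<subseteq> insert k (\<Union>w\<in>set (y # r). set w)" by (rule set_wjoin_sub)
  have lt: "\<forall>a\<in>set x. \<forall>b\<in>set (k # wjoin k (y # r)). b < a"
  proof (intro ballI)
    fix a b assume a: "a \<in> set x" and b: "b \<in> set (k # wjoin k (y # r))"
    show "b < a"
    proof (cases "b = k")
      case True then show ?thesis using 3(3) a by auto
    next
      case False
      then obtain v where v: "v \<in> set (y # r)" "b \<in> set v" using b sub by auto
      then obtain j where j: "j < length (y # r)" "(y # r) ! j = v" by (meson in_set_conv_nth)
      show ?thesis using 3(4)[rule_format, of 0 "Suc j"] j v a by simp
    qed
  qed
  have "avoids (k # wjoin k (y # r))"
  proof (rule av_cons[OF IH])
    show "\<forall>v\<in>set (wjoin k (y # r)). k \<le> v"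
    proof
      fix v assume "v \<in> set (wjoin k (y # r))"
      then have "v = k \<or> (\<exists>w\<in>set (y # r). v \<in> set w)" using sub by blast
      then show "k \<le> v" using 3(3) by (metis list.set_intros(2) order.strict_implies_order order_refl)
    qed
  qed
  then have "avoids (x @ (k # wjoin k (y # r)))" using av_app[of x] 3(2) lt by simp
  then show ?case by simp
qed

lemma rpo_av:
  shows "avoids (word (rpo n t))"
    and "(\<forall>x\<in>set (rpos n cs). avoids (word x)) \<and>
      (\<forall>i j. i < j \<longrightarrow> j < length (rpos n cs) \<longrightarrow>
         (\<forall>x\<in>set (labels (rpos n cs ! i)). \<forall>y\<in>set (labels (rpos n cs ! j)). y < x))"
proof (induction n t and n cs rule: rpo_rpos.induct)
  case (1 n) then show ?case by (simp add: avoids_def)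
next
  case (2 n cs)
  show ?case
  proof (simp only: rpo.simps word.simps, rule av_wjoin)
    show "\<forall>w\<in>set (map word (rpos (Suc n) cs)). avoids w" using conjunct1[OF 2] by simp
    show "\<forall>w\<in>set (map word (rpos (Suc n) cs)). \<forall>v\<in>set w. n < v"
    proof (intro ballI)
      fix w v assume wv: "w \<in> set (map word (rpos (Suc n) cs))" "v \<in> set w"
      then obtain x where x0: "x \<in> set (rpos (Suc n) cs)" "w = word x" by auto
      then have x: "x \<in> set (rpos (Suc n) cs)" "v \<in> set (labels x)" using set_word_sub[of x] wv by auto
      then have "v \<in> set (concat (map labels (rpos (Suc n) cs)))" by auto
      then have "v \<in> {Suc n..<Suc n + sum_list (map nint cs)}" using rpo_facts(2)[of "Suc n" cs] by blast
      then show "n < v" by simp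
    qed
    show "\<forall>i j. i < j \<longrightarrow> j < length (map word (rpos (Suc n) cs)) \<longrightarrow>
      (\<forall>x\<in>set (map word (rpos (Suc n) cs) ! i). \<forall>y\<in>set (map word (rpos (Suc n) cs) ! j). y < x)"
    proof (intro allI impI ballI)
      fix i j x y assume ij: "i < j" "j < length (map word (rpos (Suc n) cs))"
        "x \<in> set (map word (rpos (Suc n) cs) ! i)" "y \<in> set (map word (rpos (Suc n) cs) ! j)"
      have il: "i < length (rpos (Suc n) cs)" "j < length (rpos (Suc n) cs)" using ij(1,2) by auto
      have "x \<in> set (word (rpos (Suc n) cs ! i))" using ij(3) nth_map[OF il(1), of word] by metis
      moreover have "y \<in> set (word (rpos (Suc n) cs ! j))" using ij(4) nth_map[OF il(2), of word] by metis
      ultimately have "x \<in> set (labels (rpos (Suc n) cs ! i))" "y \<in> set (labels (rpos (Suc n) cs ! j))"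
        using set_word_sub by blast+
      then show "y < x" using conjunct2[OF 2, rule_format, OF ij(1) il(2)] by blast
    qed
  qed
next
  case (3 n) then show ?case by simp
next
  case (4 n c cs)
  let ?m = "n + sum_list (map nint cs)"
  have A: "set (labels (rpo ?m c)) = {?m..<?m + nint c}" using rpo_facts(1) by blast
  have B: "set (concat (map labels (rpos n cs))) = {n..<?m}" using rpo_facts(2) by simp
  have I1: "avoids (word (rpo ?m c))" using 4(1) .
  have I2: "\<forall>x\<in>set (rpos n cs). avoids (word x)" using 4(2) by blast
  have I3: "\<And>i j. i < j \<Longrightarrow> j < length (rpos n cs) \<Longrightarrow>
         (\<forall>x\<in>set (labels (rpos n cs ! i)). \<forall>y\<in>set (labels (rpos n cs ! j)). y < x)"
    using 4(2) by blast
  show ?case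
  proof (intro conjI allI impI)
    show "\<forall>x\<in>set (rpos n (c # cs)). avoids (word x)" using I1 I2 by simp
    fix i j assume ij: "i < j" "j < length (rpos n (c # cs))"
    then obtain j' where j': "j = Suc j'" by (cases j) auto
    have j'l: "j' < length (rpos n cs)" using ij j' by simp
    show "\<forall>x\<in>set (labels (rpos n (c # cs) ! i)). \<forall>y\<in>set (labels (rpos n (c # cs) ! j)). y < x"
    proof (cases i)
      case 0
      have "set (labels (rpos n cs ! j')) \<subseteq> set (concat (map labels (rpos n cs)))"
        using nth_mem[OF j'l] by auto
      then have "\<forall>y\<in>set (labels (rpos n cs ! j')). y < ?m" using B by auto
      moreover have "\<forall>x\<in>set (labels (rpo ?m c)). ?m \<le> x" using A by auto
      ultimately show ?thesis using 0 j' by fastforce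
    next
      case (Suc i')
      then have "i' < j'" using ij j' by simp
      then show ?thesis using I3[OF _ j'l] Suc j' by simp
    qed
  qed
qed


lemma av_stw: "avoids (wjoin k ws) \<Longrightarrow> \<forall>w\<in>set ws. \<forall>v\<in>set w. k < v \<Longrightarrow> stw ws"
proof (induction k ws rule: wjoin.induct)
  case (1 k) then show ?case by simp
next
  case (2 k x) then show ?case by simp
next
  case (3 k x y r)
  have w: "wjoin k (x # y # r) = x @ [k] @ wjoin k (y # r)" by simp
  have av: "avoids (wjoin k (y # r))"
    using av_infix[of "x @ [k]" "wjoin k (y # r)" "[]"] 3(2) w by simp
  have "stw (y # r)"
  proof (rule 3(1)[OF av])
    show "\<forall>w\<in>set (y # r). \<forall>v\<in>set w. k < v" using 3(3) by simp
  qed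
  moreover have "\<forall>a\<in>set x. \<forall>v\<in>set (y # r). \<forall>b\<in>set v. b \<le> a"
  proof (intro ballI)
    fix a v b assume a: "a \<in> set x" and v: "v \<in> set (y # r)" and b: "b \<in> set v"
    have "b \<in> set (wjoin k (y # r))" using set_wjoin_mem[OF v, of k] b by blast
    moreover have "k < a" using 3(3) a by simp
    ultimately show "b \<le> a" using av_sep[of x k "wjoin k (y # r)" a b] 3(2) w a by simp
  qed
  ultimately show ?case by simp
qed

fun stl :: "ltree list \<Rightarrow> bool" where
  "stl [] = True"
| "stl (g # gs) = ((\<forall>x\<in>set (labels g). \<forall>y\<in>set (concat (map labels gs)). y < x) \<and> stl gs)"

lemma stw_stl: "stw (map word cs) \<Longrightarrow> \<forall>c\<in>set cs. lwf c \<Longrightarrow> distinct (concat (map labels cs)) \<Longrightarrow> stl cs"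
proof (induction cs)
  case Nil then show ?case by simp
next
  case (Cons c cs)
  have "stl cs" using Cons by simp
  moreover have "\<forall>x\<in>set (labels c). \<forall>y\<in>set (concat (map labels cs)). y < x"
  proof (intro ballI)
    fix x y assume x: "x \<in> set (labels c)" and y: "y \<in> set (concat (map labels cs))"
    then obtain c' where c': "c' \<in> set cs" "y \<in> set (labels c')" by auto
    have "x \<in> set (word c)" using x set_word Cons.prems(2) by simp
    moreover have "y \<in> set (word c')" using c' set_word Cons.prems(2) by simp
    moreover have "word c' \<in> set (map word cs)" using c' by simp
    moreover have "\<forall>x\<in>set (word c). \<forall>v\<in>set cs. \<forall>y\<in>set (word v). y \<le> x" using Cons.prems(1) by simp
    ultimately have "y \<le> x" using c'(1) by blast
    moreover have "x \<noteq> y" using x y Cons.prems(3) by auto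
    ultimately show "y < x" by simp
  qed
  ultimately show ?case by simp
qed

lemma interval_split:
  fixes A B :: "nat set"
  assumes "A \<inter> B = {}" "A \<union> B = {m..<m+T}" "\<forall>x\<in>A. \<forall>y\<in>B. y < x" "card B = T'"
  shows "B = {m..<m+T'}" "A = {m+T'..<m+T}"
proof -
  have fB: "finite B" using assms(2) by (metis finite_Un finite_atLeastLessThan)
  have sub: "B \<subseteq> {m..<m+T'}"
  proof
    fix y assume y: "y \<in> B"
    show "y \<in> {m..<m+T'}"
    proof (rule ccontr)
      assume "y \<notin> {m..<m+T'}"
      moreover have "m \<le> y" "y < m + T" using y assms(2) by auto
      ultimately have yT: "m + T' \<le> y" by simp
      have "{m..y} \<subseteq> B"
      proof
        fix z assume z: "z \<in> {m..y}"
        then have "z \<in> A \<union> B" using assms(2) \<open>y < m+T\<close> by auto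
        moreover have "z \<notin> A" using assms(3) y z by force
        ultimately show "z \<in> B" by simp
      qed
      then have "card {m..y} \<le> card B" using fB card_mono by blast
      then have "Suc y - m \<le> T'" using assms(4) by simp
      then show False using yT by linarith
    qed
  qed
  moreover have "card B = card {m..<m+T'}" using assms(4) by simp
  ultimately show B: "B = {m..<m+T'}" using card_subset_eq by (metis finite_atLeastLessThan)
  have "T' \<le> T"
  proof -
    have "B \<subseteq> {m..<m+T}" using assms(2) by auto
    then have "card B \<le> card {m..<m+T}" using card_mono finite_atLeastLessThan by blast
    then show ?thesis using assms(4) by simp
  qed
  show "A = {m+T'..<m+T}"
  proof
    show "A \<subseteq> {m+T'..<m+T}"
    proof
      fix x assume x: "x \<in> A"
      then have "x \<in> {m..<m+T}" using assms(2) by blast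
      moreover have "x \<notin> {m..<m+T'}" using x assms(1) B by blast
      ultimately show "x \<in> {m+T'..<m+T}" by simp
    qed
    show "{m+T'..<m+T} \<subseteq> A" using assms(2) B \<open>T' \<le> T\<close> by auto
  qed
qed

lemma len_concat_labels: "length (concat (map labels gs)) = sum_list (map nint (map pi gs))"
  by (induction gs) (auto simp: len_labels)

lemma LL: "stl gs \<Longrightarrow> distinct (concat (map labels gs)) \<Longrightarrow>
  set (concat (map labels gs)) = {m..<m + length (concat (map labels gs))} \<Longrightarrow>
  (\<And>c m'. c \<in> set gs \<Longrightarrow> set (labels c) = {m'..<m' + length (labels c)} \<Longrightarrow> c = rpo m' (pi c)) \<Longrightarrow>
  gs = rpos m (map pi gs)"
proof (induction gs arbitrary: m)
  case Nil then show ?case by simp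
next
  case (Cons g gs)
  let ?L' = "length (concat (map labels gs))"
  let ?L = "length (concat (map labels (g # gs)))"
  have dis: "set (labels g) \<inter> set (concat (map labels gs)) = {}" using Cons.prems(2) by simp
  have un: "set (labels g) \<union> set (concat (map labels gs)) = {m..<m+?L}" using Cons.prems(3) by simp
  have card: "card (set (concat (map labels gs))) = ?L'"
    using Cons.prems(2) distinct_card[of "concat (map labels gs)"] by simp
  have lt: "\<forall>x\<in>set (labels g). \<forall>y\<in>set (concat (map labels gs)). y < x" using Cons.prems(1) by simp
  have B: "set (concat (map labels gs)) = {m..<m+?L'}" using interval_split(1)[OF dis un lt card] .
  have A: "set (labels g) = {m+?L'..<m+?L}" using interval_split(2)[OF dis un lt card] .
  have "?L = ?L' + length (labels g)" by simp
  then have A': "set (labels g) = {m+?L'..<(m+?L') + length (labels g)}" using A by (simp add: ac_simps)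
  have g: "g = rpo (m + ?L') (pi g)" using Cons.prems(4)[OF _ A'] by simp
  have gs: "gs = rpos m (map pi gs)"
  proof (rule Cons.IH)
    show "stl gs" using Cons.prems(1) by simp
    show "distinct (concat (map labels gs))" using Cons.prems(2) by simp
    show "set (concat (map labels gs)) = {m..<m + ?L'}" using B .
    show "\<And>c m'. c \<in> set gs \<Longrightarrow> set (labels c) = {m'..<m' + length (labels c)} \<Longrightarrow> c = rpo m' (pi c)"
      using Cons.prems(4) by simp
  qed
  have "rpos m (map pi (g # gs)) = rpo (m + ?L') (pi g) # rpos m (map pi gs)"
    using len_concat_labels[of gs] by simp
  then show ?case using g gs by simp
qed

lemma uniq:
  "lwf g \<Longrightarrow> increasing g \<Longrightarrow> distinct (labels g) \<Longrightarrow> set (labels g) = {n..<n + length (labels g)}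
   \<Longrightarrow> avoids (word g) \<Longrightarrow> g = rpo n (pi g)"
proof (induction g arbitrary: n)
  case LLeaf then show ?case by simp
next
  case (LNode k cs)
  have gt: "\<And>c x. c \<in> set cs \<Longrightarrow> x \<in> set (labels c) \<Longrightarrow> k < x"
    using inc_gt LNode.prems(2) by blast
  have "n \<in> set (labels (LNode k cs))" using LNode.prems(4) by simp
  then have "k \<le> n" using gt by fastforce
  moreover have "k \<in> {n..<n + length (labels (LNode k cs))}" using LNode.prems(4)
    by (metis labels.simps(2) list.set_intros(1))
  then have "n \<le> k" by simp
  ultimately have kn: "k = n" by simp
  let ?L = "length (concat (map labels cs))"
  have dist: "k \<notin> set (concat (map labels cs))" "distinct (concat (map labels cs))" using LNode.prems(3) by auto
  have "insert k (set (concat (map labels cs))) = {n..<n + Suc ?L}" using LNode.prems(4) by simp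
  then have "set (concat (map labels cs)) = {n..<n + Suc ?L} - {n}" using dist(1) kn by blast
  then have setc: "set (concat (map labels cs)) = {Suc n..<Suc n + ?L}" by auto
  have lw: "\<forall>c\<in>set cs. lwf c" using LNode.prems(1) by simp
  have "\<forall>w\<in>set (map word cs). \<forall>v\<in>set w. k < v"
  proof (intro ballI)
    fix w v assume "w \<in> set (map word cs)" "v \<in> set w"
    then obtain c where "c \<in> set cs" "v \<in> set (word c)" by auto
    then show "k < v" using gt set_word_sub by blast
  qed
  then have "stw (map word cs)" using av_stw[of k "map word cs"] LNode.prems(5) by simp
  then have stl: "stl cs" using stw_stl lw dist(2) by blast
  have "cs = rpos (Suc n) (map pi cs)"
  proof (rule LL[OF stl dist(2) setc])
    fix c m' assume c: "c \<in> set cs" and iv: "set (labels c) = {m'..<m' + length (labels c)}"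
    obtain l r where lr: "cs = l @ c # r" using split_list[OF c] by blast
    obtain P Q where PQ: "word (LNode k cs) = P @ word c @ Q"
      using wjoin_infix[of k "map word l" "word c" "map word r"] lr by auto
    have "avoids (word c)" using av_infix LNode.prems(5) PQ by metis
    moreover have "distinct (labels c)" using dist(2) c by (simp add: distinct_concat_iff)
    moreover have "increasing c" using LNode.prems(2) c by simp
    ultimately show "c = rpo m' (pi c)" using LNode.IH[OF c] lw c iv by blast
  qed
  then show ?case using kn by simp
qed




lemma iota_rpo: "ptree_wf t \<Longrightarrow> iota t = rpo 1 t"
proof -
  assume wf: "ptree_wf t"
  have f: "pi (rpo 1 t) = t" "length (labels (rpo 1 t)) = nint t" "distinct (labels (rpo 1 t))"
     "set (labels (rpo 1 t)) = {1..<1 + nint t}" using rpo_facts(1)[of 1 t] by auto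
  have g: "gsp (rpo 1 t)" unfolding gsp_def using f rpo_lwf(1)[OF wf] rpo_inc(1)[of 1 t]
    by (auto simp: atLeastLessThanSuc_atLeastAtMost)
  have a: "avoids213 (word (rpo 1 t))" using rpo_av(1) avoids_eq by blast
  show ?thesis unfolding iota_def
  proof (rule the_equality)
    show "gsp (rpo 1 t) \<and> pi (rpo 1 t) = t \<and> avoids213 (word (rpo 1 t))" using g f a by blast
    fix u assume u: "gsp u \<and> pi u = t \<and> avoids213 (word u)"
    have "set (labels u) = {1..<1 + length (labels u)}" using u unfolding gsp_def
      by (auto simp: atLeastLessThanSuc_atLeastAtMost)
    then have "u = rpo 1 (pi u)" using uniq[of u 1] u avoids_eq unfolding gsp_def by blast
    then show "u = rpo 1 t" using u by simp
  qed
qed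

lemma dist_idx: "distinct (concat (map labels cs)) \<Longrightarrow> i < length cs \<Longrightarrow> j < length cs \<Longrightarrow>
  v \<in> set (labels (cs!i)) \<Longrightarrow> v \<in> set (labels (cs!j)) \<Longrightarrow> i = j"
proof (induction cs arbitrary: i j)
  case Nil then show ?case by simp
next
  case (Cons c cs)
  have d: "set (labels c) \<inter> set (concat (map labels cs)) = {}" using Cons.prems(1) by simp
  have mem: "\<And>k. k < length cs \<Longrightarrow> set (labels (cs ! k)) \<subseteq> set (concat (map labels cs))"
    using nth_mem by fastforce
  show ?case
  proof (cases i)
    case 0
    show ?thesis
    proof (cases j)
      case 0 then show ?thesis using \<open>i = 0\<close> by simp
    next
      case (Suc j')
      then have "v \<in> set (concat (map labels cs))" using mem[of j'] Cons.prems(3,5) by auto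
      then show ?thesis using d Cons.prems(4) 0 by auto
    qed
  next
    case (Suc i')
    show ?thesis
    proof (cases j)
      case 0
      have "v \<in> set (concat (map labels cs))" using mem[of i'] Cons.prems(2,4) Suc by auto
      then show ?thesis using d Cons.prems(5) 0 by auto
    next
      case (Suc j')
      then show ?thesis using Cons.IH[of i' j'] Cons.prems \<open>i = Suc i'\<close> by simp
    qed
  qed
qed

lemma NS: "\<not> stl gs \<Longrightarrow> \<exists>i j x y. i < j \<and> j < length gs \<and> x \<in> set (labels (gs!i)) \<and>
   y \<in> set (labels (gs!j)) \<and> \<not> y < x"
proof (induction gs)
  case Nil then show ?case by simp
next
  case (Cons g gs)
  show ?case
  proof (cases "stl gs")
    case True
    then obtain x y where xy: "x \<in> set (labels g)" "y \<in> set (concat (map labels gs))" "\<not> y < x"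
      using Cons.prems by auto
    then obtain c where c: "c \<in> set gs" "y \<in> set (labels c)" by auto
    then obtain j where j: "j < length gs" "gs ! j = c" by (meson in_set_conv_nth)
    show ?thesis using xy c j by (intro exI[of _ 0] exI[of _ "Suc j"] exI[of _ x] exI[of _ y]) simp
  next
    case False
    then obtain i j x y where "i < j \<and> j < length gs \<and> x \<in> set (labels (gs!i)) \<and>
       y \<in> set (labels (gs!j)) \<and> \<not> y < x" using Cons.IH by blast
    then show ?thesis by (intro exI[of _ "Suc i"] exI[of _ "Suc j"] exI[of _ x] exI[of _ y]) simp
  qed
qed

lemma ivt:
  assumes "x < y" "i < j" "j < length gs" "x \<in> set (labels (gs!i))" "y \<in> set (labels (gs!j))"
    "{x..y} \<subseteq> set (concat (map labels gs))" "distinct (concat (map labels gs))"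
  shows "\<exists>a i' j'. i' < j' \<and> j' < length gs \<and> a \<in> set (labels (gs!i')) \<and> a+1 \<in> set (labels (gs!j'))"
  using assms
proof (induction "y - x" arbitrary: x i rule: less_induct)
  case less
  have "x+1 \<in> {x..y}" using less.prems(1) by simp
  then have "x+1 \<in> set (concat (map labels gs))" using less.prems(6) by blast
  then obtain c where c: "c \<in> set gs" "x+1 \<in> set (labels c)" by auto
  then obtain l where l: "l < length gs" "gs ! l = c" by (meson in_set_conv_nth)
  show ?case
  proof (cases "i < l")
    case True
    then show ?thesis using l c less.prems(4) by blast
  next
    case False
    have "x + 1 \<noteq> y"
    proof
      assume "x + 1 = y"
      then have "l = j" using dist_idx[OF less.prems(7) l(1) less.prems(3)] l c less.prems(5) by blast
      then show False using False less.prems(2) by simp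
    qed
    then have xy: "x + 1 < y" using less.prems(1) by simp
    show ?thesis
    proof (rule less.hyps[of "x+1" l])
      show "y - (x+1) < y - x" using xy by simp
      show "x + 1 < y" using xy .
      show "l < j" using False less.prems(2) by simp
      show "j < length gs" using less.prems(3) .
      show "x + 1 \<in> set (labels (gs ! l))" using l c by simp
      show "y \<in> set (labels (gs ! j))" using less.prems(5) .
      show "{x + 1..y} \<subseteq> set (concat (map labels gs))" using less.prems(6) by auto
      show "distinct (concat (map labels gs))" using less.prems(7) .
    qed
  qed
qed

lemma inc_relabel_node: "increasing (LNode k cs) \<Longrightarrow> k < a \<Longrightarrow> \<forall>c\<in>set cs. increasing (relabel (sw a) c)
  \<Longrightarrow> increasing (relabel (sw a) (LNode k cs))"
proof -
  assume inc: "increasing (LNode k cs)" and ka: "k < a" and ch: "\<forall>c\<in>set cs. increasing (relabel (sw a) c)"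
  have swk: "sw a k = k" using ka by (simp add: sw_def)
  have "\<forall>c\<in>set cs. case relabel (sw a) c of LLeaf \<Rightarrow> True | LNode j _ \<Rightarrow> k < j"
  proof
    fix c assume c: "c \<in> set cs"
    show "case relabel (sw a) c of LLeaf \<Rightarrow> True | LNode j _ \<Rightarrow> k < j"
    proof (cases c)
      case LLeaf then show ?thesis by simp
    next
      case (LNode j ds)
      then have "k < j" using inc c by auto
      then show ?thesis using LNode ka by (auto simp: sw_def)
    qed
  qed
  then show ?thesis using ch swk by simp
qed


lemma D1:
  "lwf g \<Longrightarrow> increasing g \<Longrightarrow> distinct (labels g) \<Longrightarrow> set (labels g) = {n..<n + length (labels g)}
   \<Longrightarrow> g \<noteq> rpo n (pi g) \<Longrightarrow> \<exists>a. a \<in> set (labels g) \<and> a+1 \<in> set (labels g) \<and>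
      increasing (relabel (sw a) g) \<and> before (word g) a (a+1)"
proof (induction g arbitrary: n)
  case LLeaf then show ?case by simp
next
  case (LNode k cs)
  have gt: "\<And>c x. c \<in> set cs \<Longrightarrow> x \<in> set (labels c) \<Longrightarrow> k < x"
    using inc_gt LNode.prems(2) by blast
  have "n \<in> set (labels (LNode k cs))" using LNode.prems(4) by simp
  then have "k \<le> n" using gt by fastforce
  moreover have "k \<in> {n..<n + length (labels (LNode k cs))}" using LNode.prems(4)
    by (metis labels.simps(2) list.set_intros(1))
  then have "n \<le> k" by simp
  ultimately have kn: "k = n" by simp
  let ?L = "length (concat (map labels cs))"
  have dist: "k \<notin> set (concat (map labels cs))" "distinct (concat (map labels cs))" using LNode.prems(3) by auto
  have "insert k (set (concat (map labels cs))) = {n..<n + Suc ?L}" using LNode.prems(4) by simp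
  then have "set (concat (map labels cs)) = {n..<n + Suc ?L} - {n}" using dist(1) kn by blast
  then have setc: "set (concat (map labels cs)) = {Suc n..<Suc n + ?L}" by auto
  have lw: "\<forall>c\<in>set cs. lwf c" using LNode.prems(1) by simp
  have inc: "\<forall>c\<in>set cs. increasing c" using LNode.prems(2) by simp
  show ?case
  proof (cases "stl cs")
    case True
    have "\<exists>c m'. c \<in> set cs \<and> set (labels c) = {m'..<m' + length (labels c)} \<and> c \<noteq> rpo m' (pi c)"
    proof (rule ccontr)
      assume "\<not> ?thesis"
      then have "cs = rpos (Suc n) (map pi cs)" using LL[OF True dist(2) setc] by blast
      then show False using LNode.prems(5) kn by simp
    qed
    then obtain c m' where c: "c \<in> set cs" "set (labels c) = {m'..<m' + length (labels c)}"
      "c \<noteq> rpo m' (pi c)" by blast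
    have dc: "distinct (labels c)" using dist(2) c(1) by (simp add: distinct_concat_iff)
    obtain a where a: "a \<in> set (labels c)" "a+1 \<in> set (labels c)" "increasing (relabel (sw a) c)"
       "before (word c) a (a+1)" using LNode.IH[OF c(1)] lw inc c dc by blast
    have ka: "k < a" using gt c(1) a(1) by blast
    obtain l r where lr: "cs = l @ c # r" using split_list[OF c(1)] by blast
    have dlr: "\<forall>x\<in>set l \<union> set r. a \<notin> set (labels x) \<and> a+1 \<notin> set (labels x)"
      using dist_disj[of l c r] dist(2) lr a by blast
    obtain P Q where PQ: "word (LNode k cs) = P @ word c @ Q"
      "set P \<subseteq> insert k (\<Union>w\<in>set (map word l). set w)" "set Q \<subseteq> insert k (\<Union>w\<in>set (map word r). set w)"
      using wjoin_infix[of k "map word l" "word c" "map word r"] lr by auto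
    have nP: "a \<notin> set P" "a+1 \<notin> set P"
    proof -
      have "\<forall>x\<in>set l. a \<notin> set (word x) \<and> a+1 \<notin> set (word x)" using dlr set_word_sub by blast
      then show "a \<notin> set P" "a+1 \<notin> set P" using PQ(2) ka by auto
    qed
    have nQ: "a \<notin> set Q" "a+1 \<notin> set Q"
    proof -
      have "\<forall>x\<in>set r. a \<notin> set (word x) \<and> a+1 \<notin> set (word x)" using dlr set_word_sub by blast
      then show "a \<notin> set Q" "a+1 \<notin> set Q" using PQ(3) ka by auto
    qed
    have bf: "before (word (LNode k cs)) a (a+1)" using before_embed[OF a(4) nP nQ] PQ(1) by simp
    have "\<forall>x\<in>set cs. increasing (relabel (sw a) x)"
    proof
      fix x assume x: "x \<in> set cs"
      show "increasing (relabel (sw a) x)"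
      proof (cases "x = c")
        case True then show ?thesis using a(3) by simp
      next
        case False
        then have "x \<in> set l \<union> set r" using x lr by auto
        then show ?thesis using inc_relabel inc x dlr by blast
      qed
    qed
    then have "increasing (relabel (sw a) (LNode k cs))" using inc_relabel_node LNode.prems(2) ka by blast
    moreover have "a \<in> set (labels (LNode k cs))" "a+1 \<in> set (labels (LNode k cs))" using a c(1) by auto
    ultimately show ?thesis using bf by blast
  next
    case False
    obtain i j x y where ij: "i < j" "j < length cs" "x \<in> set (labels (cs!i))"
       "y \<in> set (labels (cs!j))" "\<not> y < x" using NS[OF False] by blast
    have "x \<noteq> y" using dist_idx[OF dist(2), of i j x] ij by auto
    then have xy: "x < y" using ij(5) by simp
    have "x \<in> set (concat (map labels cs))" "y \<in> set (concat (map labels cs))"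
      using ij nth_mem[of i cs] nth_mem[of j cs] by auto
    then have "x \<in> {Suc n..<Suc n + ?L}" "y \<in> {Suc n..<Suc n + ?L}" using setc by blast+
    then have "{x..y} \<subseteq> {Suc n..<Suc n + ?L}" by auto
    then have "{x..y} \<subseteq> set (concat (map labels cs))" using setc by simp
    then obtain a i' j' where a: "i' < j'" "j' < length cs" "a \<in> set (labels (cs!i'))"
      "a+1 \<in> set (labels (cs!j'))" using ivt[OF xy ij(1,2,3,4) _ dist(2)] by blast
    have "cs ! i' \<in> set cs" using a(1,2) by simp
    then have ka: "k < a" using gt a(3) by blast
    have notboth: "\<forall>c\<in>set cs. \<not> (a \<in> set (labels c) \<and> a+1 \<in> set (labels c))"
    proof
      fix c assume "c \<in> set cs"
      then obtain l where l: "l < length cs" "cs ! l = c" by (meson in_set_conv_nth)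
      show "\<not> (a \<in> set (labels c) \<and> a+1 \<in> set (labels c))"
      proof
        assume "a \<in> set (labels c) \<and> a+1 \<in> set (labels c)"
        then have "l = i'" "l = j'" using dist_idx[OF dist(2)] l a by (metis order.strict_trans)+
        then show False using a(1) by simp
      qed
    qed
    have "\<forall>x\<in>set cs. increasing (relabel (sw a) x)" using inc_relabel inc notboth by blast
    then have incr: "increasing (relabel (sw a) (LNode k cs))" using inc_relabel_node LNode.prems(2) ka by blast
    define P where "P = wjoin k (map word (take j' cs)) @ [k]"
    define Q where "Q = wjoin k (map word (drop j' cs))"
    have "take j' cs \<noteq> []" using a(1,2) by auto
    moreover have "drop j' cs \<noteq> []" using a(2) by auto
    ultimately have w: "word (LNode k cs) = P @ Q" unfolding P_def Q_def
      using wjoin_append[of "map word (take j' cs)" "map word (drop j' cs)" k]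
      by (metis append.assoc append_take_drop_id map_append Nil_is_map_conv word.simps(2))
    have nP: "a+1 \<notin> set P"
    proof
      assume "a+1 \<in> set P"
      then have "a+1 \<in> set (wjoin k (map word (take j' cs)))" using ka unfolding P_def by auto
      then obtain c where c: "c \<in> set (take j' cs)" "a+1 \<in> set (word c)" using set_wjoin_sub ka by fastforce
      then obtain l where l: "l < length (take j' cs)" "take j' cs ! l = c" by (meson in_set_conv_nth)
      have "a+1 \<in> set (labels (cs ! l))" using c l set_word_sub by auto
      then have "l = j'" using dist_idx[OF dist(2), of l j' "a+1"] l a by simp
      then show False using l by simp
    qed
    have nQ: "a \<notin> set Q"
    proof
      assume "a \<in> set Q"
      then obtain c where c: "c \<in> set (drop j' cs)" "a \<in> set (word c)" using set_wjoin_sub ka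
        unfolding Q_def by fastforce
      then obtain l where l: "l < length (drop j' cs)" "drop j' cs ! l = c" by (meson in_set_conv_nth)
      have "a \<in> set (labels (cs ! (j' + l)))" using c l set_word_sub by auto
      moreover have "j' + l < length cs" using l by simp
      ultimately have "j' + l = i'" using dist_idx[OF dist(2), of "j' + l" i' a] a by simp
      then show False using a(1) by simp
    qed
    have bf: "before (word (LNode k cs)) a (a+1)" using before_split[OF w nP nQ] .
    have "a \<in> set (labels (LNode k cs))" "a+1 \<in> set (labels (LNode k cs))"
      using a nth_mem[of i' cs] nth_mem[of j' cs] by auto
    then show ?thesis using bf incr by blast
  qed
qed


lemma card_iInv_le: "card (iInv w) \<le> card (set w) * card (set w)"
proof -
  have "iInv w \<subseteq> set w \<times> set w" unfolding iInv_def by auto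
  then have "card (iInv w) \<le> card (set w \<times> set w)" by (intro card_mono) auto
  then show ?thesis by (simp add: card_cartesian_product)
qed

lemma gsp_set_word: "gsp g \<Longrightarrow> set (word g) = {1..length (labels g)}"
  using set_word unfolding gsp_def by blast

lemma D: "gsp g \<Longrightarrow> pi g = t \<Longrightarrow> pw_le (word g) (word (rpo 1 t))"
proof (induction g rule: measure_induct_rule[where f = "\<lambda>g. nint t * nint t - card (iInv (word g))"])
  case (less g)
  show ?case
  proof (cases "g = rpo 1 t")
    case True then show ?thesis unfolding pw_le_def by simp
  next
    case False
    have iv: "set (labels g) = {1..<1 + length (labels g)}" using less.prems(1) unfolding gsp_def
      by (auto simp: atLeastLessThanSuc_atLeastAtMost)
    obtain a where a: "a \<in> set (labels g)" "a+1 \<in> set (labels g)" "increasing (relabel (sw a) g)"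
      "before (word g) a (a+1)"
      using D1[of g 1] less.prems False iv unfolding gsp_def by blast
    define h where "h = relabel (sw a) g"
    have lh: "lwf h" unfolding h_def using less.prems(1) lwf_relabel unfolding gsp_def by blast
    have gh: "gsp h" using gsp_sw[OF less.prems(1) a(1,2) lh] a(3) unfolding h_def by (simp add: labels_relabel)
    have ph: "pi h = t" unfolding h_def using pi_relabel less.prems(2) by simp
    have wh: "word h = map (sw a) (word g)" unfolding h_def by (rule word_relabel)
    have sw: "set (word g) = set (labels g)" using less.prems(1) set_word unfolding gsp_def by blast
    have cc: "card (iInv (word h)) = card (iInv (word g)) + 1"
      using before_cover[of a "word g"] a sw wh by simp
    have cov: "pw_cover (word g) (word h)"
      unfolding pw_cover_def using packed_word[OF less.prems(1)] packed_word[OF gh] cc wh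
      by (metis Tswap_invol Tswap_sw)
    have N: "length (labels h) = nint t" using ph len_labels by simp
    have "card (set (word h)) = nint t" using gsp_set_word[OF gh] N by simp
    then have "card (iInv (word h)) \<le> nint t * nint t" using card_iInv_le[of "word h"] by simp
    then have "nint t * nint t - card (iInv (word h)) < nint t * nint t - card (iInv (word g))"
      using cc by simp
    then have "pw_le (word h) (word (rpo 1 t))" using less.IH gh ph by blast
    then show ?thesis using cov unfolding pw_le_def by (meson converse_rtranclp_into_rtranclp)
  qed
qed


lemma pi_Node_inv: "pi g = Node zs \<Longrightarrow> \<exists>k gs. g = LNode k gs \<and> map pi gs = zs"
  by (cases g) auto

lemma R: "left_rot s t \<Longrightarrow> lwf g \<Longrightarrow> increasing g \<Longrightarrow> distinct (labels g) \<Longrightarrow> lcp g \<Longrightarrow> pi g = s \<Longrightarrow>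
  \<exists>a h. a \<in> set (labels g) \<and> a+1 \<in> set (labels g) \<and> before (word g) a (a+1) \<and> lwf h \<and> increasing h
    \<and> mset (labels h) = mset (map (sw a) (labels g)) \<and> word h = map (sw a) (word g) \<and> pi h = t"
proof (induction arbitrary: g rule: left_rot.induct)
  case (root cs ds d1)
  obtain k gs where g: "g = LNode k gs" "map pi gs = cs @ [Node (d1 # ds)]"
    using pi_Node_inv[OF root.prems(5)] by blast
  obtain gl gys where gl: "gs = gl @ gys" "map pi gl = cs" "map pi gys = [Node (d1 # ds)]"
    using g(2) by (auto simp: map_eq_append_conv)
  obtain gy gys' where gy0: "gys = gy # gys'" using gl(3) by (cases gys) auto
  have gy: "gys = [gy]" "pi gy = Node (d1 # ds)" using gl(3) gy0 by auto
  obtain j gds where gy20: "gy = LNode j gds" using gy(2) by (cases gy) auto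
  have gy2: "gy = LNode j gds" "map pi gds = d1 # ds" using gy20 gy(2) by auto
  obtain gd1 gds' where gd0: "gds = gd1 # gds'" using gy2(2) by (cases gds) auto
  have gd: "gds = gd1 # gds'" "pi gd1 = d1" "map pi gds' = ds" using gy2(2) gd0 by auto
  have cs: "gs = gl @ [LNode j (gd1 # gds')]" using gl gy gy2 gd by simp
  have "j = Suc k" using root.prems(4) g cs by simp
  then have cs: "gs = gl @ [LNode (k+1) (gd1 # gds')]" using cs by simp
  have "gl \<noteq> []" using gl(2) root.hyps(1) by auto
  have "gds' \<noteq> []" using gd(3) root.hyps(2) by auto
  have gt: "\<And>c x. c \<in> set gs \<Longrightarrow> x \<in> set (labels c) \<Longrightarrow> k < x"
    using inc_gt root.prems(2) g by blast
  have dist: "k \<notin> set (concat (map labels gs))" "distinct (concat (map labels gs))"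
    using root.prems(3) g by auto
  let ?c = "LNode (k+1) (gd1 # gds')"
  have dgs: "distinct (concat (map labels gl) @ (k+1) # labels gd1 @ concat (map labels gds'))"
    using dist(2) cs by simp
  have dl: "\<forall>x\<in>set gl. k \<notin> set (labels x) \<and> k+1 \<notin> set (labels x)"
  proof
    fix x assume x: "x \<in> set gl"
    then have "x \<in> set gs" using cs by simp
    then have "k \<notin> set (labels x)" using gt by blast
    moreover have "k+1 \<notin> set (labels x)" using dgs x by auto
    ultimately show "k \<notin> set (labels x) \<and> k+1 \<notin> set (labels x)" by blast
  qed
  have dd: "\<forall>x\<in>set (gd1 # gds'). k \<notin> set (labels x) \<and> k+1 \<notin> set (labels x)"
  proof
    fix x assume x: "x \<in> set (gd1 # gds')"
    have "k+1 \<notin> set (labels x)" using dgs x by auto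
    moreover have "increasing (LNode (k+1) (gd1 # gds'))" using root.prems(2) g cs by simp
    then have "k+1 < y" if "y \<in> set (labels x)" for y using inc_gt x that by blast
    ultimately show "k \<notin> set (labels x) \<and> k+1 \<notin> set (labels x)" by fastforce
  qed
  define h where "h = LNode k (LNode (k+1) (gl @ [gd1]) # gds')"
  have wg: "word g = wjoin k (map word gl) @ [k] @ word gd1 @ [k+1] @ wjoin (k+1) (map word gds')"
    using g cs \<open>gds' \<noteq> []\<close> \<open>gl \<noteq> []\<close> by (simp add: wjoin_append wjoin_Cons2)
  have wh: "word h = wjoin (k+1) (map word gl) @ [k+1] @ word gd1 @ [k] @ wjoin k (map word gds')"
    using \<open>gds' \<noteq> []\<close> \<open>gl \<noteq> []\<close> unfolding h_def by (simp add: wjoin_append wjoin_Cons2)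
  have e1: "map (sw k) (wjoin k (map word gl)) = wjoin (k+1) (map word gl)"
  proof -
    have "map (map (sw k)) (map word gl) = map word gl" using map_sw_words_id[of gl k] dl by blast
    then show ?thesis by (simp only: map_wjoin) (simp add: sw_def)
  qed
  have e2: "map (sw k) (wjoin (k+1) (map word gds')) = wjoin k (map word gds')"
  proof -
    have "map (map (sw k)) (map word gds') = map word gds'" using map_sw_words_id[of gds' k] dd by simp
    then show ?thesis by (simp only: map_wjoin) (simp add: sw_def)
  qed
  have e3: "map (sw k) (word gd1) = word gd1" using map_sw_word_id dd by auto
  have wrd: "word h = map (sw k) (word g)" using wg wh e1 e2 e3 by (simp add: sw_def)
  have bf: "before (word g) k (k+1)"
  proof (rule before_split)
    show "word g = (wjoin k (map word gl) @ [k] @ word gd1) @ ((k+1) # wjoin (k+1) (map word gds'))"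
      using wg by simp
    have "\<forall>x\<in>set gl. k+1 \<notin> set (word x)" using dl set_word_sub by blast
    then have "k+1 \<notin> set (wjoin k (map word gl))" using set_wjoin_sub[of k "map word gl"] by auto
    moreover have "k+1 \<notin> set (word gd1)" using dd set_word_sub by auto
    ultimately show "k+1 \<notin> set (wjoin k (map word gl) @ [k] @ word gd1)" by simp
    have "\<forall>x\<in>set gds'. k \<notin> set (word x)" using dd set_word_sub by auto
    then have "k \<notin> set (wjoin (k+1) (map word gds'))" using set_wjoin_sub[of "k+1" "map word gds'"] by auto
    then show "k \<notin> set ((k+1) # wjoin (k+1) (map word gds'))" by simp
  qed
  have incc: "increasing ?c" using root.prems(2) g cs by simp
  have lwfc: "lwf ?c" using root.prems(1) g cs by simp
  have lwfh: "lwf h" unfolding h_def using root.prems(1) g cs lwfc \<open>gds' \<noteq> []\<close> \<open>gl \<noteq> []\<close>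
    by (auto simp: Suc_le_eq)
  have incl: "\<forall>x\<in>set gl. increasing x \<and> (case x of LLeaf \<Rightarrow> True | LNode j _ \<Rightarrow> k+1 < j)"
  proof
    fix x assume x: "x \<in> set gl"
    have "increasing x" "case x of LLeaf \<Rightarrow> True | LNode j _ \<Rightarrow> k < j"
      using root.prems(2) x g cs by auto
    moreover have "k+1 \<notin> set (labels x)" using dl x by auto
    ultimately show "increasing x \<and> (case x of LLeaf \<Rightarrow> True | LNode j _ \<Rightarrow> k+1 < j)"
      by (cases x) auto
  qed
  have inch: "increasing h" unfolding h_def using incl incc by (auto split: ltree.splits)
  have mh: "mset (labels h) = mset (map (sw k) (labels g))"
  proof -
    have "map (sw k) (concat (map labels gl)) = concat (map labels gl)" using map_sw_labels_id dl by blast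
    moreover have "map (sw k) (concat (map labels gds')) = concat (map labels gds')"
      using map_sw_labels_id dd by simp
    moreover have "map (sw k) (labels gd1) = labels gd1" using map_sw_id dd by simp
    ultimately show ?thesis unfolding h_def using g cs by (simp add: sw_def add_mset_commute)
  qed
  have ph: "pi h = Node (Node (cs @ [d1]) # ds)" unfolding h_def using gl(2) gd by simp
  have "k \<in> set (labels g)" "k+1 \<in> set (labels g)" using g cs by auto
  then show ?case using bf lwfh inch mh wrd ph by blast
next
  case (sub c c' l r)
  obtain k gs where g: "g = LNode k gs" "map pi gs = l @ c # r"
    using pi_Node_inv[OF sub.prems(5)] by blast
  obtain gl gcs where gl: "gs = gl @ gcs" "map pi gl = l" "map pi gcs = c # r"
    using g(2) by (auto simp: map_eq_append_conv)
  obtain gc gr where gc0: "gcs = gc # gr" using gl(3) by (cases gcs) auto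
  have gc: "gcs = gc # gr" "pi gc = c" "map pi gr = r" using gl(3) gc0 by auto
  have lr: "gs = gl @ gc # gr" using gl gc by simp
  have gcin: "gc \<in> set gs" using lr by simp
  have gt: "\<And>c x. c \<in> set gs \<Longrightarrow> x \<in> set (labels c) \<Longrightarrow> k < x"
    using inc_gt sub.prems(2) g by blast
  have dist: "k \<notin> set (concat (map labels gs))" "distinct (concat (map labels gs))"
    using sub.prems(3) g by auto
  have dc: "distinct (labels gc)" using dist(2) gcin by (simp add: distinct_concat_iff)
  obtain a hc where hc: "a \<in> set (labels gc)" "a+1 \<in> set (labels gc)" "before (word gc) a (a+1)"
    "lwf hc" "increasing hc" "mset (labels hc) = mset (map (sw a) (labels gc))"
    "word hc = map (sw a) (word gc)" "pi hc = c'"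
    using sub.IH[of gc] sub.prems g gcin dc gc(2) by auto
  have ka: "k < a" using gt gcin hc(1) by blast
  have swk: "sw a k = k" using ka by (simp add: sw_def)
  have dlr: "\<forall>x\<in>set gl \<union> set gr. a \<notin> set (labels x) \<and> a+1 \<notin> set (labels x)"
    using dist_disj[of gl gc gr] dist(2) lr hc(1,2) by blast
  obtain P Q where PQ: "word g = P @ word gc @ Q"
    "set P \<subseteq> insert k (\<Union>w\<in>set (map word gl). set w)" "set Q \<subseteq> insert k (\<Union>w\<in>set (map word gr). set w)"
    using wjoin_infix[of k "map word gl" "word gc" "map word gr"] lr g by auto
  have nP: "a \<notin> set P" "a+1 \<notin> set P"
  proof -
    have "\<forall>x\<in>set gl. a \<notin> set (word x) \<and> a+1 \<notin> set (word x)" using dlr set_word_sub by blast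
    then show "a \<notin> set P" "a+1 \<notin> set P" using PQ(2) ka by auto
  qed
  have nQ: "a \<notin> set Q" "a+1 \<notin> set Q"
  proof -
    have "\<forall>x\<in>set gr. a \<notin> set (word x) \<and> a+1 \<notin> set (word x)" using dlr set_word_sub by blast
    then show "a \<notin> set Q" "a+1 \<notin> set Q" using PQ(3) ka by auto
  qed
  have bf: "before (word g) a (a+1)" using before_embed[OF hc(3) nP nQ] PQ(1) by simp
  define h where "h = LNode k (gl @ hc # gr)"
  have lwfh: "lwf h" unfolding h_def using sub.prems(1) g lr hc(4) by auto
  have sethc: "set (labels hc) = sw a ` set (labels gc)"
    using hc(6) by (metis mset_map set_mset_mset set_image_mset)
  have "\<forall>x\<in>set (labels hc). k < x"
  proof
    fix x assume "x \<in> set (labels hc)"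
    then obtain y where "y \<in> set (labels gc)" "x = sw a y" using sethc by auto
    then have "k < y" using gt gcin by blast
    then show "k < x" using \<open>x = sw a y\<close> ka by (auto simp: sw_def)
  qed
  then have "case hc of LLeaf \<Rightarrow> True | LNode j _ \<Rightarrow> k < j" by (cases hc) auto
  then have inch: "increasing h" unfolding h_def using sub.prems(2) g lr hc(5) by auto
  have ml: "map (sw a) (concat (map labels gl)) = concat (map labels gl)"
    using map_sw_labels_id dlr by blast
  have mr: "map (sw a) (concat (map labels gr)) = concat (map labels gr)"
    using map_sw_labels_id dlr by blast
  have mh: "mset (labels h) = mset (map (sw a) (labels g))"
    unfolding h_def using g lr hc(6) ml mr swk by simp
  have wl: "map (map (sw a)) (map word gl) = map word gl" using map_sw_words_id dlr by blast
  have wr: "map (map (sw a)) (map word gr) = map word gr" using map_sw_words_id dlr by blast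
  have wh: "word h = map (sw a) (word g)"
  proof -
    have "map (sw a) (word g) = wjoin k (map (map (sw a)) (map word gl @ word gc # map word gr))"
      using g lr swk by (simp only: word.simps map_wjoin map_append list.map)
    also have "\<dots> = wjoin k (map word gl @ word hc # map word gr)"
      using wl wr hc(7) by (simp del: map_map)
    finally show ?thesis unfolding h_def by simp
  qed
  have ph: "pi h = Node (l @ c' # r)" unfolding h_def using gl(2) gc(3) hc(8) by simp
  have "a \<in> set (labels g)" "a+1 \<in> set (labels g)" using g gcin hc(1,2) by auto
  then show ?case using bf lwfh inch mh wh ph by blast
qed


lemma left_rot_wf: "left_rot s t \<Longrightarrow> ptree_wf s \<Longrightarrow> ptree_wf t"
proof (induction rule: left_rot.induct)
  case (root cs ds d1)
  then show ?case by (cases cs; cases ds) auto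
next
  case (sub c c' l r)
  then show ?case by auto
qed

lemma pt_le_wf: "pt_le s t \<Longrightarrow> ptree_wf s \<Longrightarrow> ptree_wf t"
  unfolding pt_le_def by (induction rule: rtranclp_induct) (auto intro: left_rot_wf)

lemma gsp_rpo: "ptree_wf t \<Longrightarrow> gsp (rpo 1 t)"
proof -
  assume wf: "ptree_wf t"
  have f: "length (labels (rpo 1 t)) = nint t" "distinct (labels (rpo 1 t))"
     "set (labels (rpo 1 t)) = {1..<1 + nint t}" using rpo_facts(1)[of 1 t] by auto
  then show "gsp (rpo 1 t)" unfolding gsp_def using rpo_lwf(1)[OF wf] rpo_inc(1)[of 1 t]
    by (auto simp: atLeastLessThanSuc_atLeastAtMost)
qed

lemma part2_step: "left_rot s t \<Longrightarrow> ptree_wf s \<Longrightarrow> pw_le (word (rpo 1 s)) (word (rpo 1 t))"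
proof -
  assume lr: "left_rot s t" and wf: "ptree_wf s"
  define g where "g = rpo 1 s"
  have gg: "gsp g" unfolding g_def using gsp_rpo[OF wf] .
  have pg: "pi g = s" unfolding g_def using rpo_facts(1) by blast
  have lg: "lcp g" unfolding g_def by (rule rpo_lcp(1))
  obtain a h where ah: "a \<in> set (labels g)" "a+1 \<in> set (labels g)" "before (word g) a (a+1)" "lwf h"
    "increasing h" "mset (labels h) = mset (map (sw a) (labels g))" "word h = map (sw a) (word g)" "pi h = t"
    using R[OF lr _ _ _ lg pg] gg unfolding gsp_def by blast
  have gh: "gsp h" using gsp_sw[OF gg ah(1,2,4,5,6)] .
  have sw: "set (word g) = set (labels g)" using gg set_word unfolding gsp_def by blast
  have cc: "card (iInv (word h)) = card (iInv (word g)) + 1"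
    using before_cover[of a "word g"] ah(1,2,3,7) sw by simp
  have cov: "pw_cover (word g) (word h)"
    unfolding pw_cover_def using packed_word[OF gg] packed_word[OF gh] cc ah(7)
    by (metis Tswap_invol Tswap_sw)
  have "pw_le (word h) (word (rpo 1 t))" using D[OF gh ah(8)] .
  then show ?thesis using cov unfolding pw_le_def g_def by (meson converse_rtranclp_into_rtranclp)
qed

lemma part2_aux: "pt_le s t \<Longrightarrow> ptree_wf s \<Longrightarrow> pw_le (word (rpo 1 s)) (word (rpo 1 t))"
  unfolding pt_le_def
proof (induction rule: rtranclp_induct)
  case base then show ?case unfolding pw_le_def by simp
next
  case (step y z)
  have "ptree_wf y" using pt_le_wf[of s y] step unfolding pt_le_def by blast
  then have "pw_le (word (rpo 1 y)) (word (rpo 1 z))" using part2_step step(2) by blast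
  then show ?case using step(3)[OF step(4)] unfolding pw_le_def by simp
qed

lemma part2: "pt_le s t \<Longrightarrow> ptree_wf s \<Longrightarrow> gsp_le (iota s) (iota t)"
proof -
  assume le: "pt_le s t" and wf: "ptree_wf s"
  have "ptree_wf t" using pt_le_wf[OF le wf] .
  then show ?thesis using part2_aux[OF le wf] iota_rpo wf unfolding gsp_le_def by simp
qed

theorem mainTheorem8:
  fixes u v :: ltree and s t :: ptree
  assumes "gsp u" and "gsp v"
    and "degree (pi u) = degree (pi v)"
    and "ptree_wf s" and "ptree_wf t"
    and "degree s = degree t"
  shows "(gsp_le u v \<longrightarrow> pt_le (pi u) (pi v))
       \<and> (pt_le s t \<longrightarrow> gsp_le (iota s) (iota t))"
  using part1[OF assms(1,2)] part2[OF _ assms(4)] by blast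

end
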